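(* Let $A(G_1,G_2)$ be an adjacency graph in the SCaJ model and let $B$ be one of its components. Then: (a) if $B$ is an $N$-shaped component, $\#\mathrm{ST}(\{B\})=1$; (b) if $B$ is a $W$-shaped component of size $w\ge 1$, $\#\mathrm{ST}(\{B\})=2^{w-1}$; (c) if $B$ is an $M$-shaped component of size $m\ge1$, $\#\mathrm{ST}(\{B\})=2^{m-1}$; (d) if $B$ is a non-trivial crown of size $c$, $\#\mathrm{ST}(\{B\})=c\cdot 2^{c-1}$.
   Context: A genome is a finite directed graph whose edges (genes) carry pairwise distinct labels, with no isolated vertices and every vertex of total degree 1 or 2. Each gene $X$ has extremities $X^t$ (tail) and $X^h$ (head). A degree-2 vertex is an adjacency, identified with the unordered pair of extremities meeting there; a degree-1 vertex is a telomere, identified with its single extremity. In the Single Cut-and-Join (SCaJ) model the operations are: cut (adjacency $ab$ becomes telomeres $a,b$), join (telomeres $a,b$ become adjacency $ab$), and cut-join (adjacency $ab$ and telomere $c$ become adjacency $ac$ and telomere $b$). The adjacency graph $A(G_1,G_2)$ of two genomes on the same gene set is the bipartite multigraph on $V_1\sqcup V_2$, $V_i$ the adjacencies and telomeres of $G_i$, with as many edges between $u\in V_1$, $v\in V_2$ as shared extremities; operations on $G_1$ act on the vertices of $V_1$ accordingly. Its components are paths and even cycles. The size of a component $B$ is $\lfloor |E(B)|/2\rfloor$. A $W$-shaped component is an even-length path with both endpoints in $V_1$; an $M$-shaped component is an even-length path with both endpoints in $V_2$; an $N$-shaped component is an odd-length path (trivial if it is a single edge); a crown is a cycle, trivial if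 it has size 1. For a set $\mathcal B'$ of components, $d(\mathcal B')=\sum_{B\in\mathcal B'}\mathrm{size}(B)-\#\{\text{trivial crowns in }\mathcal B'\}+\#\{\text{non-trivial crowns in }\mathcal B'\}$; it is the minimum number of operations that turn all components of $\mathcal B'$ into trivial components without acting on other components. $\#\mathrm{ST}(\mathcal B')$ denotes the number of sequences of $d(\mathcal B')$ operations, acting only on components of $\mathcal B'$ (and the components produced from them), that transform all components of $\mathcal B'$ into trivial components and in which all components of $\mathcal B'$ sort together, where in a scenario two components $A,B$ satisfy $A\sim B$ if $A=B$ or some cut-join joins an extremity of $A$ and an extremity of $B$ into an adjacency, and "sort together" is the transitive closure of $\sim$ (for $|\mathcal B'|=1$ this condition is vacuous). *)

theory Defs
  imports Main
begin

datatype ext = Tail | Head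

type_synonym 'g extremity = "'g \<times> ext"

text \<open>A genome on the gene set X is represented by its vertex set: each vertex is
identified with the set of extremities meeting there (an adjacency = 2 extremities,
a telomere = 1 extremity).  No isolated vertices and all degrees 1 or 2 means the
vertex sets form a partition of the extremities of X into blocks of size 1 or 2.\<close>

definition extremities :: "'g set \<Rightarrow> 'g extremity set" where
  "extremities X = X \<times> UNIV"

definition genome :: "'g set \<Rightarrow> 'g extremity set set \<Rightarrow> bool" where
  "genome X G \<longleftrightarrow> finite X \<and> \<Union>G = extremities X
     \<and> (\<forall>u\<in>G. card u = 1 \<or> card u = 2)
     \<and> (\<forall>u\<in>G. \<forall>v\<in>G. u \<noteq> v \<longrightarrow> u \<inter> v = {})"

datatype 'e scaj_op =
    Cut "'e set"
  | Join "'e set"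
  | CutJoin 'e 'e 'e      \<comment> \<open>adjacency {a,b} and telomere c become adjacency {a,c} and telomere b\<close>

fun op_valid :: "'e set set \<Rightarrow> 'e scaj_op \<Rightarrow> bool" where
  "op_valid G (Cut s) \<longleftrightarrow> s \<in> G \<and> card s = 2"
| "op_valid G (Join s) \<longleftrightarrow> card s = 2 \<and> (\<forall>x\<in>s. {x} \<in> G)"
| "op_valid G (CutJoin a b c) \<longleftrightarrow> a \<noteq> b \<and> {a, b} \<in> G \<and> {c} \<in> G"

fun op_apply :: "'e set set \<Rightarrow> 'e scaj_op \<Rightarrow> 'e set set" where
  "op_apply G (Cut s) = (G - {s}) \<union> {{x} | x. x \<in> s}"
| "op_apply G (Join s) = (G - {{x} | x. x \<in> s}) \<union> {s}"
| "op_apply G (CutJoin a b c) = (G - {{a, b}, {c}}) \<union> {{a, c}, {b}}"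

fun op_ext :: "'e scaj_op \<Rightarrow> 'e set" where
  "op_ext (Cut s) = s"
| "op_ext (Join s) = s"
| "op_ext (CutJoin a b c) = {a, b, c}"

fun valid_seq :: "'e set set \<Rightarrow> 'e scaj_op list \<Rightarrow> bool" where
  "valid_seq G [] = True"
| "valid_seq G (o1 # os) \<longleftrightarrow> op_valid G o1 \<and> valid_seq (op_apply G o1) os"

definition run_seq :: "'e set set \<Rightarrow> 'e scaj_op list \<Rightarrow> 'e set set" where
  "run_seq G os = foldl op_apply G os"

text \<open>The edges of A(G1,G2) are the extremities (the extremity x joins the G1-vertex
and the G2-vertex containing x).  A component is identified with its edge set:
two edges are linked if they share a G1-vertex or a G2-vertex.\<close>

definition link :: "'e set set \<Rightarrow> 'e set set \<Rightarrow> ('e \<times> 'e) set" where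
  "link G1 G2 = {(x, y). \<exists>u \<in> G1 \<union> G2. x \<in> u \<and> y \<in> u}"

definition components :: "'e set set \<Rightarrow> 'e set set \<Rightarrow> 'e set set" where
  "components G1 G2 = {(link G1 G2)\<^sup>* `` {x} | x. x \<in> \<Union>G1}"

text \<open>Vertices of A(G1,G2) are tagged Inl (side V1) / Inr (side V2); the degree of a
vertex u in A is card u.  Degree-1 vertices of a component C:\<close>

definition deg1_vertices :: "'e set set \<Rightarrow> 'e set set \<Rightarrow> 'e set \<Rightarrow> ('e set + 'e set) set" where
  "deg1_vertices G1 G2 C =
     Inl ` {u \<in> G1. u \<subseteq> C \<and> card u = 1} \<union> Inr ` {u \<in> G2. u \<subseteq> C \<and> card u = 1}"

text \<open>(All degrees are 1 or 2, so a component is a path iff it has exactly two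
degree-1 vertices (its endpoints) and a cycle iff it has none; its length is card C.)\<close>

definition is_path_comp :: "'e set set \<Rightarrow> 'e set set \<Rightarrow> 'e set \<Rightarrow> bool" where
  "is_path_comp G1 G2 C \<longleftrightarrow> card (deg1_vertices G1 G2 C) = 2"

definition is_crown :: "'e set set \<Rightarrow> 'e set set \<Rightarrow> 'e set \<Rightarrow> bool" where
  "is_crown G1 G2 C \<longleftrightarrow> deg1_vertices G1 G2 C = {}"

definition W_shaped :: "'e set set \<Rightarrow> 'e set set \<Rightarrow> 'e set \<Rightarrow> bool" where
  "W_shaped G1 G2 C \<longleftrightarrow> is_path_comp G1 G2 C \<and> even (card C)
     \<and> deg1_vertices G1 G2 C \<subseteq> range Inl"

definition M_shaped :: "'e set set \<Rightarrow> 'e set set \<Rightarrow> 'e set \<Rightarrow> bool" where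
  "M_shaped G1 G2 C \<longleftrightarrow> is_path_comp G1 G2 C \<and> even (card C)
     \<and> deg1_vertices G1 G2 C \<subseteq> range Inr"

definition N_shaped :: "'e set set \<Rightarrow> 'e set set \<Rightarrow> 'e set \<Rightarrow> bool" where
  "N_shaped G1 G2 C \<longleftrightarrow> is_path_comp G1 G2 C \<and> odd (card C)"

definition comp_size :: "'e set \<Rightarrow> nat" where
  "comp_size C = card C div 2"

definition trivial_crown :: "'e set set \<Rightarrow> 'e set set \<Rightarrow> 'e set \<Rightarrow> bool" where
  "trivial_crown G1 G2 C \<longleftrightarrow> is_crown G1 G2 C \<and> comp_size C = 1"

definition nontrivial_crown :: "'e set set \<Rightarrow> 'e set set \<Rightarrow> 'e set \<Rightarrow> bool" where
  "nontrivial_crown G1 G2 C \<longleftrightarrow> is_crown G1 G2 C \<and> comp_size C \<noteq> 1"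

definition trivial_comp :: "'e set set \<Rightarrow> 'e set set \<Rightarrow> 'e set \<Rightarrow> bool" where
  "trivial_comp G1 G2 C \<longleftrightarrow> (N_shaped G1 G2 C \<and> card C = 1) \<or> trivial_crown G1 G2 C"

definition d_comp :: "'e set set \<Rightarrow> 'e set set \<Rightarrow> 'e set \<Rightarrow> nat" where
  "d_comp G1 G2 B = comp_size B - (if trivial_crown G1 G2 B then 1 else 0)
                     + (if nontrivial_crown G1 G2 B then 1 else 0)"

text \<open>#ST({B}): sequences of d({B}) operations on G1 acting only on B (and the
components produced from it, i.e. only on extremities of B), after which every
component of the resulting adjacency graph lying in B is trivial.  For a single
component the "sort together" condition is vacuous.\<close>

definition nST_single :: "'e set set \<Rightarrow> 'e set set \<Rightarrow> 'e set \<Rightarrow> nat" where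
  "nST_single G1 G2 B = card {os. length os = d_comp G1 G2 B
      \<and> (\<forall>o1 \<in> set os. op_ext o1 \<subseteq> B)
      \<and> valid_seq G1 os
      \<and> (\<forall>C \<in> components (run_seq G1 os) G2. C \<subseteq> B \<longrightarrow> trivial_comp (run_seq G1 os) G2 C)}"

end

theory Submission
  imports Defs
begin


definition restr :: "'e set \<Rightarrow> 'e set set \<Rightarrow> 'e set set" where
  "restr B G = {u \<in> G. u \<subseteq> B}"

definition opsB :: "'e set \<Rightarrow> 'e scaj_op set" where
  "opsB B = {p. op_ext p \<subseteq> B}"

definition seqs :: "'e set set \<Rightarrow> 'e set \<Rightarrow> 'e set set \<Rightarrow> nat \<Rightarrow> 'e scaj_op list set" where
  "seqs T B H k = {os. length os = k \<and> (\<forall>p\<in>set os. op_ext p \<subseteq> B) \<and> valid_seq H os \<and> run_seq H os = T}"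

definition cntR :: "'e set set \<Rightarrow> 'e set \<Rightarrow> 'e set set \<Rightarrow> nat \<Rightarrow> nat" where
  "cntR T B H k = card (seqs T B H k)"

lemma finite_opsB: "finite B \<Longrightarrow> finite (opsB B)"
proof -
  assume fB: "finite B"
  have "opsB B \<subseteq> Cut ` Pow B \<union> Join ` Pow B \<union> (\<lambda>(a,b,c). CutJoin a b c) ` (B \<times> B \<times> B)"
  proof
    fix p assume "p \<in> opsB B"
    then show "p \<in> Cut ` Pow B \<union> Join ` Pow B \<union> (\<lambda>(a,b,c). CutJoin a b c) ` (B \<times> B \<times> B)"
      by (cases p) (auto simp: opsB_def image_iff)
  qed
  moreover have "finite (Cut ` Pow B \<union> Join ` Pow B \<union> (\<lambda>(a,b,c). CutJoin a b c) ` (B \<times> B \<times> B))"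
    using fB by auto
  ultimately show ?thesis using finite_subset by blast
qed

lemma run_seq_Nil[simp]: "run_seq H [] = H" by (simp add: run_seq_def)
lemma run_seq_Cons[simp]: "run_seq H (p # os) = run_seq (op_apply H p) os" by (simp add: run_seq_def)

lemma finite_seqs: "finite B \<Longrightarrow> finite (seqs T B H k)"
proof -
  assume "finite B"
  then have "finite {xs. set xs \<subseteq> opsB B \<and> length xs = k}"
    by (intro finite_lists_length_eq finite_opsB)
  moreover have "seqs T B H k \<subseteq> {xs. set xs \<subseteq> opsB B \<and> length xs = k}"
    by (auto simp: seqs_def opsB_def)
  ultimately show ?thesis using finite_subset by blast
qed

lemma seqs_0: "seqs T B H 0 = (if H = T then {[]} else {})"
  by (auto simp: seqs_def)

lemma cntR_0: "cntR T B H 0 = (if H = T then 1 else 0)"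
  by (simp add: cntR_def seqs_0)

lemma seqs_Suc: "seqs T B H (Suc k) =
   (\<Union>p \<in> {p \<in> opsB B. op_valid H p}. (Cons p) ` seqs T B (op_apply H p) k)"
proof (intro equalityI subsetI)
  fix os assume "os \<in> seqs T B H (Suc k)"
  then obtain p os' where "os = p # os'" "length os' = k" "op_ext p \<subseteq> B" "op_valid H p"
     "\<forall>q\<in>set os'. op_ext q \<subseteq> B" "valid_seq (op_apply H p) os'" "run_seq (op_apply H p) os' = T"
    by (auto simp: seqs_def length_Suc_conv)
  then show "os \<in> (\<Union>p \<in> {p \<in> opsB B. op_valid H p}. (Cons p) ` seqs T B (op_apply H p) k)"
    unfolding seqs_def opsB_def by fastforce
next
  fix os assume "os \<in> (\<Union>p \<in> {p \<in> opsB B. op_valid H p}. (Cons p) ` seqs T B (op_apply H p) k)"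
  then show "os \<in> seqs T B H (Suc k)"
    unfolding seqs_def opsB_def by fastforce
qed

lemma cntR_Suc: assumes "finite B"
  shows "cntR T B H (Suc k) = (\<Sum>p \<in> {p \<in> opsB B. op_valid H p}. cntR T B (op_apply H p) k)"
proof -
  have "cntR T B H (Suc k) = card (\<Union>p \<in> {p \<in> opsB B. op_valid H p}. (Cons p) ` seqs T B (op_apply H p) k)"
    by (simp add: cntR_def seqs_Suc)
  also have "\<dots> = (\<Sum>p \<in> {p \<in> opsB B. op_valid H p}. card ((Cons p) ` seqs T B (op_apply H p) k))"
  proof (rule card_UN_disjoint)
    show "finite {p \<in> opsB B. op_valid H p}" using finite_opsB[OF assms] by simp
    show "\<forall>i\<in>{p \<in> opsB B. op_valid H p}. finite ((#) i ` seqs T B (op_apply H i) k)"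
      using finite_seqs[OF assms] by blast
    show "\<forall>i\<in>{p \<in> opsB B. op_valid H p}. \<forall>j\<in>{p \<in> opsB B. op_valid H p}. i \<noteq> j \<longrightarrow>
        (#) i ` seqs T B (op_apply H i) k \<inter> (#) j ` seqs T B (op_apply H j) k = {}" by blast
  qed
  also have "\<dots> = (\<Sum>p \<in> {p \<in> opsB B. op_valid H p}. cntR T B (op_apply H p) k)"
    by (simp add: cntR_def card_image)
  finally show ?thesis .
qed

fun cre :: "'e scaj_op \<Rightarrow> 'e set set" where
  "cre (Cut s) = {}"
| "cre (Join s) = {s}"
| "cre (CutJoin a b c) = {{a, c}}"

definition x2 :: "'e set set \<Rightarrow> 'e set set \<Rightarrow> nat" where
  "x2 T H = card {u \<in> T. card u = 2 \<and> u \<notin> H}"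

lemma op_apply_sub: "op_apply H p \<subseteq> H \<union> cre p \<union> {u. card u = 1}"
  by (cases p) auto

lemma x2_step:
  assumes "finite T"
  shows "x2 T H \<le> Suc (x2 T (op_apply H p))"
    and "cre p \<inter> T = {} \<Longrightarrow> x2 T H \<le> x2 T (op_apply H p)"
proof -
  let ?A = "{u \<in> T. card u = 2 \<and> u \<notin> H}"
  let ?A' = "{u \<in> T. card u = 2 \<and> u \<notin> op_apply H p}"
  have sub: "?A - cre p \<subseteq> ?A'" using op_apply_sub[of H p] by auto
  have fin: "finite ?A'" using assms by simp
  have cc: "card (cre p) \<le> 1" by (cases p) auto
  have fc: "finite (cre p)" by (cases p) auto
  have fA: "finite (?A - cre p)" using assms by simp
  have "card ?A \<le> card ((?A - cre p) \<union> cre p)"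
    by (rule card_mono) (use fA fc in auto)
  also have "\<dots> \<le> card (?A - cre p) + card (cre p)" by (rule card_Un_le)
  finally have "card ?A \<le> card (?A - cre p) + card (cre p)" .
  also have "\<dots> \<le> card ?A' + 1" using card_mono[OF fin sub] cc by simp
  finally show "x2 T H \<le> Suc (x2 T (op_apply H p))" by (simp add: x2_def)
  assume "cre p \<inter> T = {}"
  then have "?A \<subseteq> ?A'" using sub by auto
  then show "x2 T H \<le> x2 T (op_apply H p)" unfolding x2_def using fin by (rule card_mono[rotated])
qed

lemma seqs_x2: "finite T \<Longrightarrow> os \<in> seqs T B H k \<Longrightarrow> x2 T H \<le> k"
proof (induction os arbitrary: H k)
  case Nil
  then have "H = T" "k = 0" by (auto simp: seqs_def)
  moreover have "x2 T T = 0" unfolding x2_def by (metis (no_types, lifting) card.empty empty_Collect_eq)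
  ultimately show ?case by simp
next
  case (Cons p os)
  then obtain k' where k: "k = Suc k'" and "os \<in> seqs T B (op_apply H p) k'"
    by (auto simp: seqs_def)
  then have "x2 T (op_apply H p) \<le> k'" using Cons by blast
  then show ?case using x2_step(1)[OF Cons.prems(1), of H p] k by simp
qed

lemma cntR_lb: "finite T \<Longrightarrow> k < x2 T H \<Longrightarrow> cntR T B H k = 0"
proof -
  assume a: "finite T" "k < x2 T H"
  have "seqs T B H k = {}" using seqs_x2[OF a(1)] a(2) by (meson equals0I leD)
  then show ?thesis by (simp add: cntR_def)
qed

definition good :: "'e set set \<Rightarrow> 'e set \<Rightarrow> 'e set set \<Rightarrow> 'e scaj_op set" where
  "good T B H = {p \<in> opsB B. op_valid H p \<and> cre p \<inter> T \<noteq> {}}"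

lemma cntR_good:
  assumes "finite B" "finite T" "Suc k \<le> x2 T H"
  shows "cntR T B H (Suc k) = (\<Sum>p \<in> good T B H. cntR T B (op_apply H p) k)"
proof -
  have "cntR T B H (Suc k) = (\<Sum>p \<in> {p \<in> opsB B. op_valid H p}. cntR T B (op_apply H p) k)"
    by (rule cntR_Suc[OF assms(1)])
  also have "\<dots> = (\<Sum>p \<in> good T B H. cntR T B (op_apply H p) k)"
  proof (rule sum.mono_neutral_right)
    show "finite {p \<in> opsB B. op_valid H p}" using finite_opsB[OF assms(1)] by simp
    show "good T B H \<subseteq> {p \<in> opsB B. op_valid H p}" by (auto simp: good_def)
    show "\<forall>i\<in>{p \<in> opsB B. op_valid H p} - good T B H. cntR T B (op_apply H i) k = 0"
    proof
      fix p assume "p \<in> {p \<in> opsB B. op_valid H p} - good T B H"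
      then have "cre p \<inter> T = {}" by (auto simp: good_def)
      then have "x2 T H \<le> x2 T (op_apply H p)" by (rule x2_step(2)[OF assms(2)])
      then show "cntR T B (op_apply H p) k = 0" using assms(3) by (intro cntR_lb[OF assms(2)]) simp
    qed
  qed
  finally show ?thesis .
qed


fun mop :: "('a \<Rightarrow> 'b) \<Rightarrow> 'a scaj_op \<Rightarrow> 'b scaj_op" where
  "mop f (Cut s) = Cut (f ` s)"
| "mop f (Join s) = Join (f ` s)"
| "mop f (CutJoin a b c) = CutJoin (f a) (f b) (f c)"

definition img :: "('a \<Rightarrow> 'b) \<Rightarrow> 'a set set \<Rightarrow> 'b set set" where
  "img f H = (`) f ` H"

lemma op_ext_mop: "op_ext (mop f p) = f ` op_ext p"
  by (cases p) auto

lemma img_mem: "inj_on f B \<Longrightarrow> H \<subseteq> Pow B \<Longrightarrow> u \<subseteq> B \<Longrightarrow> (f ` u \<in> img f H) = (u \<in> H)"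
  unfolding img_def by (auto simp: inj_on_image_eq_iff)

lemma op_apply_Pow: "H \<subseteq> Pow B \<Longrightarrow> op_ext p \<subseteq> B \<Longrightarrow> op_apply H p \<subseteq> Pow B"
  by (cases p) auto

lemma inj_img: "inj_on f B \<Longrightarrow> inj_on ((`) f) (Pow B)"
  by (auto simp: inj_on_def inj_on_image_eq_iff)

lemma img_diff: "inj_on f B \<Longrightarrow> X \<subseteq> Pow B \<Longrightarrow> Y \<subseteq> Pow B \<Longrightarrow> img f (X - Y) = img f X - img f Y"
  unfolding img_def by (rule inj_on_image_set_diff[OF inj_img]) auto

lemma img_un: "img f (X \<union> Y) = img f X \<union> img f Y" by (auto simp: img_def)

lemma mop_valid:
  assumes inj: "inj_on f B" and HB: "H \<subseteq> Pow B" and pB: "op_ext p \<subseteq> B" and v: "op_valid H p"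
  shows "op_valid (img f H) (mop f p)"
    and "op_apply (img f H) (mop f p) = img f (op_apply H p)"
proof -
  have sing: "\<And>x. x \<in> B \<Longrightarrow> ({f x} \<in> img f H) = ({x} \<in> H)"
    using img_mem[OF inj HB, of "{_}"] by auto
  have cardi: "\<And>s. s \<subseteq> B \<Longrightarrow> card (f ` s) = card s"
    using inj by (meson card_image inj_on_subset)
  show "op_valid (img f H) (mop f p)"
  proof (cases p)
    case (Cut s)
    then show ?thesis using v pB cardi img_mem[OF inj HB] by auto
  next
    case (Join s)
    then show ?thesis using v pB cardi sing by auto
  next
    case (CutJoin a b c)
    have "f a \<noteq> f b" using v pB inj CutJoin by (auto simp: inj_on_def)
    moreover have "{f a, f b} \<in> img f H" using img_mem[OF inj HB, of "{a,b}"] v pB CutJoin by auto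
    moreover have "{f c} \<in> img f H" using sing[of c] v pB CutJoin by auto
    ultimately show ?thesis using CutJoin by simp
  qed
  show "op_apply (img f H) (mop f p) = img f (op_apply H p)"
  proof (cases p)
    case (Cut s)
    have e1: "img f {{x} |x. x \<in> s} = {{x} |x. x \<in> f ` s}" by (auto simp: img_def)
    have "img f (H - {s}) = img f H - img f {s}"
      by (rule img_diff[OF inj HB]) (use pB Cut in auto)
    then show ?thesis using Cut by (simp add: img_un e1) (simp add: img_def)
  next
    case (Join s)
    have e1: "img f {{x} |x. x \<in> s} = {{x} |x. x \<in> f ` s}" by (auto simp: img_def)
    have "img f (H - {{x} |x. x \<in> s}) = img f H - img f {{x} |x. x \<in> s}"
      by (rule img_diff[OF inj HB]) (use pB Join in auto)
    then show ?thesis using Join by (simp add: img_un e1) (simp add: img_def)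
  next
    case (CutJoin a b c)
    have "img f (H - {{a, b}, {c}}) = img f H - img f {{a, b}, {c}}"
      by (rule img_diff[OF inj HB]) (use pB CutJoin in auto)
    then show ?thesis using CutJoin by (simp add: img_un) (simp add: img_def)
  qed
qed

lemma mop_seq:
  assumes inj: "inj_on f B"
  shows "H \<subseteq> Pow B \<Longrightarrow> \<forall>p\<in>set os. op_ext p \<subseteq> B \<Longrightarrow> valid_seq H os \<Longrightarrow>
     valid_seq (img f H) (map (mop f) os) \<and> run_seq (img f H) (map (mop f) os) = img f (run_seq H os)"
proof (induction os arbitrary: H)
  case Nil then show ?case by simp
next
  case (Cons p os)
  have v: "op_valid H p" and pB: "op_ext p \<subseteq> B" using Cons.prems by auto
  have "op_apply H p \<subseteq> Pow B" using op_apply_Pow[OF Cons.prems(1) pB] .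
  then have IH: "valid_seq (img f (op_apply H p)) (map (mop f) os) \<and>
     run_seq (img f (op_apply H p)) (map (mop f) os) = img f (run_seq (op_apply H p) os)"
    using Cons by auto
  show ?case using mop_valid[OF inj Cons.prems(1) pB v] IH by simp
qed

lemma mop_inj: assumes "inj_on f B" shows "inj_on (mop f) (opsB B)"
proof (rule inj_onI)
  fix p q assume p: "p \<in> opsB B" and q: "q \<in> opsB B" and e: "mop f p = mop f q"
  show "p = q"
  proof (cases p)
    case (Cut s)
    then obtain s' where "q = Cut s'" using e by (cases q) auto
    then show ?thesis using Cut e p q assms by (auto simp: opsB_def inj_on_image_eq_iff)
  next
    case (Join s)
    then obtain s' where "q = Join s'" using e by (cases q) auto
    then show ?thesis using Join e p q assms by (auto simp: opsB_def inj_on_image_eq_iff)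
  next
    case (CutJoin a b c)
    then obtain a' b' c' where "q = CutJoin a' b' c'" using e by (cases q) auto
    then show ?thesis using CutJoin e p q assms by (auto simp: opsB_def inj_on_def)
  qed
qed

lemma cntR_le:
  assumes inj: "inj_on f B" and fin: "finite B" and HB: "H \<subseteq> Pow B"
  shows "cntR T B H k \<le> cntR (img f T) (f ` B) (img f H) k"
  unfolding cntR_def
proof (rule card_inj_on_le)
  show "finite (seqs (img f T) (f ` B) (img f H) k)" using fin by (simp add: finite_seqs)
  show "map (mop f) ` seqs T B H k \<subseteq> seqs (img f T) (f ` B) (img f H) k"
  proof
    fix os' assume "os' \<in> map (mop f) ` seqs T B H k"
    then obtain os where os: "os' = map (mop f) os" "os \<in> seqs T B H k" by auto
    then have a: "\<forall>p\<in>set os. op_ext p \<subseteq> B" "valid_seq H os" "run_seq H os = T" "length os = k"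
      by (auto simp: seqs_def)
    from mop_seq[OF inj HB a(1,2)] a os(1) show "os' \<in> seqs (img f T) (f ` B) (img f H) k"
      by (auto simp: seqs_def op_ext_mop)
  qed
  show "inj_on (map (mop f)) (seqs T B H k)"
  proof (rule inj_onI)
    fix xs ys assume xs: "xs \<in> seqs T B H k" and ys: "ys \<in> seqs T B H k" and e: "map (mop f) xs = map (mop f) ys"
    have l: "length xs = length ys" using e by (metis length_map)
    show "xs = ys"
    proof (rule nth_equalityI[OF l])
      fix i assume i: "i < length xs"
      have "xs ! i \<in> opsB B" "ys ! i \<in> opsB B" using xs ys i l by (auto simp: seqs_def opsB_def)
      moreover have "mop f (xs ! i) = mop f (ys ! i)" using e i l by (metis nth_map)
      ultimately show "xs ! i = ys ! i" using mop_inj[OF inj] by (auto simp: inj_on_def)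
    qed
  qed
qed

lemma cntR_transfer:
  assumes inj: "inj_on f B" and fin: "finite B" and HB: "H \<subseteq> Pow B" and TB: "T \<subseteq> Pow B"
  shows "cntR (img f T) (f ` B) (img f H) k = cntR T B H k"
proof (rule antisym)
  show "cntR T B H k \<le> cntR (img f T) (f ` B) (img f H) k" by (rule cntR_le[OF inj fin HB])
  let ?g = "inv_into B f"
  have ig: "inj_on ?g (f ` B)" by (rule inj_on_inv_into) simp
  have gB: "?g ` f ` B = B" using inj by (simp add: image_inv_into_cancel)
  have bk: "\<And>X. X \<subseteq> Pow B \<Longrightarrow> img ?g (img f X) = X"
  proof -
    fix X :: "'a set set" assume X: "X \<subseteq> Pow B"
    have "\<And>u. u \<subseteq> B \<Longrightarrow> ?g ` f ` u = u" using inj by (simp add: image_inv_into_cancel)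
    then have "img ?g (img f X) = (\<lambda>u. u) ` X" unfolding img_def image_image using X
      by (intro image_cong) auto
    then show "img ?g (img f X) = X" by simp
  qed
  have HB': "img f H \<subseteq> Pow (f ` B)" using HB by (auto simp: img_def)
  have "cntR (img f T) (f ` B) (img f H) k \<le> cntR (img ?g (img f T)) (?g ` f ` B) (img ?g (img f H)) k"
    by (rule cntR_le[OF ig _ HB']) (use fin in simp)
  then show "cntR (img f T) (f ` B) (img f H) k \<le> cntR T B H k"
    using bk[OF HB] bk[OF TB] gB by simp
qed


definition pr :: "nat \<Rightarrow> nat set" where "pr i = {i, Suc i}"

definition blk :: "(nat \<Rightarrow> bool) \<Rightarrow> (nat \<Rightarrow> bool) \<Rightarrow> nat set set" where
  "blk P Q = {pr i | i. P i} \<union> {{i} | i. Q i}"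

lemma pr_eq: "({x, y} = pr i) = ((x = i \<and> y = Suc i) \<or> (x = Suc i \<and> y = i))"
  by (auto simp: pr_def doubleton_eq_iff)

lemma pr_inj[simp]: "(pr i = pr j) = (i = j)"
  by (auto simp: pr_def doubleton_eq_iff)

lemma sing_ne_pr[simp]: "{x} \<noteq> pr i" "pr i \<noteq> {x}"
  by (auto simp: pr_def)

lemma card_pr[simp]: "card (pr i) = 2" by (simp add: pr_def)

lemma mem_blk_sing: "({c} \<in> blk P Q) = Q c"
  by (auto simp: blk_def)

lemma mem_blk_pr: "(pr j \<in> blk P Q) = P j"
  by (auto simp: blk_def)

lemma mem_blk_pair: "x \<noteq> y \<Longrightarrow> ({x, y} \<in> blk P Q) = (\<exists>j. P j \<and> {x, y} = pr j)"
  by (auto simp: blk_def doubleton_eq_iff)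

lemma blk_cong: "(\<And>i. P i = P' i) \<Longrightarrow> (\<And>i. Q i = Q' i) \<Longrightarrow> blk P Q = blk P' Q'"
proof -
  assume "\<And>i. P i = P' i" "\<And>i. Q i = Q' i"
  then have "P = P'" "Q = Q'" by auto
  then show ?thesis by simp
qed

lemma blk_Pow: "(\<And>i. P i \<Longrightarrow> Suc i < L) \<Longrightarrow> (\<And>i. Q i \<Longrightarrow> i < L) \<Longrightarrow> blk P Q \<subseteq> Pow {..<L}"
  unfolding blk_def pr_def by (force dest: Suc_lessD)

lemma blk_minus_pr: "blk P Q - {pr j} = blk (P(j := False)) Q"
  unfolding blk_def by auto

lemma blk_minus_sing: "blk P Q - {{c}} = blk P (Q(c := False))"
  unfolding blk_def by auto

lemma blk_plus_pr: "insert (pr j) (blk P Q) = blk (P(j := True)) Q"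
  unfolding blk_def by auto

lemma blk_plus_sing: "insert {c} (blk P Q) = blk P (Q(c := True))"
  unfolding blk_def by auto

lemma apply_cut: "op_apply (blk P Q) (Cut (pr j)) = blk (P(j := False)) (Q(j := True, Suc j := True))"
proof -
  have "{{x} |x. x \<in> pr j} = {{j}, {Suc j}}" by (auto simp: pr_def)
  then have "op_apply (blk P Q) (Cut (pr j)) = insert {Suc j} (insert {j} (blk P Q - {pr j}))" by auto
  then show ?thesis by (simp only: blk_minus_pr blk_plus_sing)
qed

lemma apply_join: "op_apply (blk P Q) (Join (pr k)) = blk (P(k := True)) (Q(k := False, Suc k := False))"
proof -
  have "{{x} |x. x \<in> pr k} = {{k}, {Suc k}}" by (auto simp: pr_def)
  then have "op_apply (blk P Q) (Join (pr k)) = insert (pr k) ((blk P Q - {{k}}) - {{Suc k}})" by auto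
  then show ?thesis by (simp only: blk_minus_sing blk_plus_pr)
qed

lemma apply_cj: assumes "x \<noteq> y" "{x, y} = pr j" "{x, c} = pr k"
  shows "op_apply (blk P Q) (CutJoin x y c) = blk (P(j := False, k := True)) (Q(c := False, y := True))"
proof -
  have "op_apply (blk P Q) (CutJoin x y c) = insert {y} (insert (pr k) ((blk P Q - {pr j}) - {{c}}))"
    using assms by auto
  then show ?thesis by (simp only: blk_minus_sing blk_plus_pr blk_minus_pr blk_plus_sing)
qed

lemma good_blk_cases:
  assumes "p \<in> good (blk P2 Q2) B (blk P Q)"
  shows "(\<exists>i. p = Join (pr i) \<and> P2 i \<and> Q i \<and> Q (Suc i)) \<or>
    (\<exists>x y c j. p = CutJoin x y c \<and> x \<noteq> y \<and> P j \<and> {x, y} = pr j \<and> Q c \<and>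
       (x = c \<and> Q2 x \<or> x \<noteq> c \<and> (\<exists>i. P2 i \<and> {x, c} = pr i)))"
proof (cases p)
  case (Cut s) then show ?thesis using assms by (simp add: good_def)
next
  case (Join s)
  then have v: "card s = 2" "\<forall>x\<in>s. {x} \<in> blk P Q" "s \<in> blk P2 Q2"
    using assms by (auto simp: good_def)
  then obtain i where "P2 i" "s = pr i" by (auto simp: blk_def)
  then show ?thesis using Join v(2) by (auto simp: pr_def mem_blk_sing)
next
  case (CutJoin x y c)
  then have v: "x \<noteq> y" "{x, y} \<in> blk P Q" "{c} \<in> blk P Q" "{x, c} \<in> blk P2 Q2"
    using assms by (auto simp: good_def)
  then obtain j where j: "P j" "{x, y} = pr j" using mem_blk_pair by blast
  show ?thesis
  proof (cases "x = c")
    case True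
    then show ?thesis using CutJoin v j by (auto simp: mem_blk_sing)
  next
    case False
    then obtain i where "P2 i" "{x, c} = pr i" using v(4) mem_blk_pair by blast
    then show ?thesis using CutJoin v j False by (auto simp: mem_blk_sing)
  qed
qed

lemma good_join: "pr i \<subseteq> B \<Longrightarrow> P2 i \<Longrightarrow> Q i \<Longrightarrow> Q (Suc i) \<Longrightarrow> Join (pr i) \<in> good (blk P2 Q2) B (blk P Q)"
proof -
  assume a: "pr i \<subseteq> B" "P2 i" "Q i" "Q (Suc i)"
  have "\<forall>x\<in>pr i. {x} \<in> blk P Q" using a by (auto simp: pr_def mem_blk_sing)
  moreover have "pr i \<in> blk P2 Q2" using a by (simp add: mem_blk_pr)
  ultimately show ?thesis using a by (auto simp: good_def opsB_def)
qed

lemma good_cj: "{x, y, c} \<subseteq> B \<Longrightarrow> x \<noteq> y \<Longrightarrow> P j \<Longrightarrow> {x, y} = pr j \<Longrightarrow> Q c \<Longrightarrow> P2 i \<Longrightarrow> {x, c} = pr i \<Longrightarrow>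
   CutJoin x y c \<in> good (blk P2 Q2) B (blk P Q)"
  by (auto simp: good_def opsB_def mem_blk_sing mem_blk_pr)

lemma x2_blk:
  assumes "finite {i. P2 i}"
  shows "card {i. P2 i \<and> \<not> P i} \<le> x2 (blk P2 Q2) (blk P Q)"
proof -
  have "pr ` {i. P2 i \<and> \<not> P i} \<subseteq> {u \<in> blk P2 Q2. card u = 2 \<and> u \<notin> blk P Q}"
  proof
    fix u assume "u \<in> pr ` {i. P2 i \<and> \<not> P i}"
    then obtain i where "u = pr i" "P2 i" "\<not> P i" by blast
    then show "u \<in> {u \<in> blk P2 Q2. card u = 2 \<and> u \<notin> blk P Q}" by (simp add: mem_blk_pr)
  qed
  moreover have "finite {u \<in> blk P2 Q2. card u = 2 \<and> u \<notin> blk P Q}"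
  proof -
    have "{u \<in> blk P2 Q2. card u = 2 \<and> u \<notin> blk P Q} \<subseteq> pr ` {i. P2 i}" by (auto simp: blk_def)
    then show ?thesis using assms finite_subset by blast
  qed
  ultimately have "card (pr ` {i. P2 i \<and> \<not> P i}) \<le> x2 (blk P2 Q2) (blk P Q)"
    unfolding x2_def by (rule card_mono[rotated])
  moreover have "inj_on pr {i. P2 i \<and> \<not> P i}" by (auto simp: inj_on_def)
  ultimately show ?thesis by (simp add: card_image)
qed


definition PT :: "nat \<Rightarrow> nat \<Rightarrow> bool" where "PT w i = (even i \<and> i < 2*w)"
definition PW :: "nat \<Rightarrow> nat \<Rightarrow> nat \<Rightarrow> nat \<Rightarrow> bool" where
  "PW w a b i = ((even i \<and> (i < 2*a \<or> 2*b \<le> i) \<and> i < 2*w) \<or> (odd i \<and> 2*a < i \<and> i + 2 < 2*b))"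
definition QW :: "nat \<Rightarrow> nat \<Rightarrow> nat \<Rightarrow> bool" where "QW a b i = (i = 2*a \<or> i + 1 = 2*b)"

abbreviation TW where "TW w \<equiv> blk (PT w) (\<lambda>_. False)"
abbreviation SW where "SW w a b \<equiv> blk (PW w a b) (QW a b)"

lemma TW_Pow: "TW w \<subseteq> Pow {..<2*w}"
  by (rule blk_Pow) (auto simp: PT_def elim!: evenE)

lemma finT: "finite (TW w)" using TW_Pow by (meson finite_Pow_iff finite_lessThan finite_subset)

lemma sum_two: "x \<noteq> y \<Longrightarrow> sum f {x, y} = f x + f y" by simp

lemma W_step1:
  assumes "Suc a \<le> w"
  shows "cntR (TW w) {..<2*w} (SW w a (Suc a)) 1 = 1"
proof -
  let ?H = "SW w a (Suc a)"
  have x2: "1 \<le> x2 (TW w) ?H"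
  proof -
    have "2*a \<in> {i. PT w i \<and> \<not> PW w a (Suc a) i}" using assms by (auto simp: PT_def PW_def)
    then have "1 \<le> card {i. PT w i \<and> \<not> PW w a (Suc a) i}"
      by (metis (no_types, lifting) One_nat_def Suc_leI card_gt_0_iff empty_iff finite_nat_set_iff_bounded
          PT_def mem_Collect_eq)
    also have "\<dots> \<le> x2 (TW w) ?H" by (rule x2_blk) (auto simp: PT_def)
    finally show ?thesis .
  qed
  have g: "good (TW w) {..<2*w} ?H = {Join (pr (2*a))}"
  proof (intro equalityI subsetI)
    fix p assume "p \<in> good (TW w) {..<2*w} ?H"
    from good_blk_cases[OF this] show "p \<in> {Join (pr (2*a))}"
    proof (elim disjE exE conjE)
      fix i assume a: "p = Join (pr i)" "PT w i" "QW a (Suc a) i" "QW a (Suc a) (Suc i)"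
      have "i = 2*a" by (insert a(2-4)[unfolded PT_def QW_def], (elim disjE conjE evenE oddE; arith))
      then show ?thesis using a by simp
    next
      fix x y c j i assume "x \<noteq> y" "PW w a (Suc a) j" "{x, y} = pr j" "QW a (Suc a) c" "x \<noteq> c" "PT w i" "{x, c} = pr i"
      note h = this[unfolded PT_def QW_def PW_def pr_eq]
      have False by (insert h, (elim disjE conjE evenE oddE; arith))
      then show ?thesis ..
    qed simp
  next
    fix p assume "p \<in> {Join (pr (2*a))}"
    then have p: "p = Join (pr (2*a))" by simp
    have "Join (pr (2*a)) \<in> good (TW w) {..<2*w} ?H"
      by (rule good_join) (use assms in \<open>auto simp: PT_def QW_def pr_def\<close>)
    then show "p \<in> good (TW w) {..<2*w} ?H" using p by simp
  qed
  have r: "op_apply ?H (Join (pr (2*a))) = TW w"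
    unfolding apply_join by (rule blk_cong) (use assms in \<open>auto simp: PT_def PW_def QW_def\<close>)
  have "cntR (TW w) {..<2*w} ?H (Suc 0) = (\<Sum>p\<in>good (TW w) {..<2*w} ?H. cntR (TW w) {..<2*w} (op_apply ?H p) 0)"
    by (rule cntR_good) (use x2 finT in auto)
  also have "\<dots> = cntR (TW w) {..<2*w} (op_apply ?H (Join (pr (2*a)))) 0" by (simp only: g) simp
  also have "\<dots> = 1" by (simp only: r cntR_0) simp
  finally show ?thesis by simp
qed

lemma W_count:
  "\<forall>a b. b = a + Suc n \<longrightarrow> b \<le> w \<longrightarrow> cntR (TW w) {..<2*w} (SW w a b) (Suc n) = 2 ^ n"
proof (induction n)
  case 0 then show ?case using W_step1 by simp
next
  case (Suc m)
  show ?case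
  proof (intro allI impI)
    fix a b assume b: "b = a + Suc (Suc m)" and bw: "b \<le> w"
    let ?H = "SW w a b"
    let ?o1 = "CutJoin (2*a+1) (2*a+2) (2*a)"
    let ?o2 = "CutJoin (2*a+2*m+2) (2*a+2*m+1) (2*a+2*m+3)"
    have x2: "Suc (Suc m) \<le> x2 (TW w) ?H"
    proof -
      have "(\<lambda>i. 2*i) ` {a..<b} \<subseteq> {i. PT w i \<and> \<not> PW w a b i}" using bw by (auto simp: PT_def PW_def)
      then have "card ((\<lambda>i. 2*i) ` {a..<b}) \<le> card {i. PT w i \<and> \<not> PW w a b i}"
        by (rule card_mono[rotated]) (auto simp: PT_def)
      moreover have "card ((\<lambda>i. 2*i) ` {a..<b}) = Suc (Suc m)" using b by (simp add: card_image inj_on_def)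
      moreover have "card {i. PT w i \<and> \<not> PW w a b i} \<le> x2 (TW w) ?H" by (rule x2_blk) (auto simp: PT_def)
      ultimately show ?thesis by simp
    qed
    have g: "good (TW w) {..<2*w} ?H = {?o1, ?o2}"
    proof (intro equalityI subsetI)
      fix p assume "p \<in> good (TW w) {..<2*w} ?H"
      from good_blk_cases[OF this] show "p \<in> {?o1, ?o2}"
      proof (elim disjE exE conjE)
        fix i assume "PT w i" "QW a b i" "QW a b (Suc i)"
        note h = this[unfolded PT_def QW_def]
        have False by (insert h b, (elim disjE conjE evenE oddE; arith))
        then show ?thesis ..
      next
        fix x y c j i assume pc: "p = CutJoin x y c" and "x \<noteq> y" "PW w a b j" "{x, y} = pr j" "QW a b c" "x \<noteq> c" "PT w i" "{x, c} = pr i"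
        note h = this[unfolded PT_def QW_def PW_def pr_eq]
        have "(x = 2*a+1 \<and> y = 2*a+2 \<and> c = 2*a) \<or> (x = 2*a+2*m+2 \<and> y = 2*a+2*m+1 \<and> c = 2*a+2*m+3)"
        proof (cases "c = 2*a")
          case True
          have x: "x = 2*a+1" by (insert h(6,7,8) True, (elim disjE conjE evenE oddE; arith))
          have "y = 2*a+2" by (insert h(2,3,4) x True b, (elim disjE conjE evenE oddE; arith))
          then show ?thesis using x True by simp
        next
          case False
          then have c: "c = 2*a+2*m+3" using h(5) b by arith
          have x: "x = 2*a+2*m+2" by (insert h(6,7,8) c, (elim disjE conjE evenE oddE; arith))
          have "y = 2*a+2*m+1" by (insert h(2,3,4) x c b, (elim disjE conjE evenE oddE; arith))
          then show ?thesis using x c by simp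
        qed
        then show ?thesis using pc by auto
      qed simp
    next
      fix p assume "p \<in> {?o1, ?o2}"
      then show "p \<in> good (TW w) {..<2*w} ?H"
      proof
        assume p: "p = ?o1"
        have "?o1 \<in> good (TW w) {..<2*w} ?H" using b bw
          by (intro good_cj[where j="2*a+1" and i="2*a"]) (auto simp: PT_def PW_def QW_def pr_def)
        then show ?thesis using p by simp
      next
        assume "p \<in> {?o2}"
        then have p: "p = ?o2" by simp
        have "?o2 \<in> good (TW w) {..<2*w} ?H" using b bw
          by (intro good_cj[where j="2*a+2*m+1" and i="2*a+2*m+2"]) (auto simp: PT_def PW_def QW_def pr_def)
        then show ?thesis using p by simp
      qed
    qed
    have r1: "op_apply ?H ?o1 = SW w (Suc a) b"
      using b bw by (subst apply_cj[where j="2*a+1" and k="2*a"]) (auto simp: pr_def intro!: blk_cong simp: PW_def QW_def fun_upd_def elim!: evenE oddE, ((arith)+)?)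
    have r2: "op_apply ?H ?o2 = SW w a (a + Suc m)"
      using b bw by (subst apply_cj[where j="2*a+2*m+1" and k="2*a+2*m+2"]) (auto simp: pr_def intro!: blk_cong simp: PW_def QW_def fun_upd_def elim!: evenE oddE, ((arith)+)?)
    have ne: "?o1 \<noteq> ?o2" by simp
    have i1: "cntR (TW w) {..<2*w} (SW w (Suc a) b) (Suc m) = 2^m"
    proof -
      have "b = Suc a + Suc m" using b by simp
      then show ?thesis using Suc.IH bw by blast
    qed
    have i2: "cntR (TW w) {..<2*w} (SW w a (a + Suc m)) (Suc m) = 2^m" using Suc.IH b bw by auto
    have "cntR (TW w) {..<2*w} ?H (Suc (Suc m)) = (\<Sum>p\<in>good (TW w) {..<2*w} ?H. cntR (TW w) {..<2*w} (op_apply ?H p) (Suc m))"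
      by (rule cntR_good) (use x2 finT in auto)
    also have "\<dots> = cntR (TW w) {..<2*w} (op_apply ?H ?o1) (Suc m) + cntR (TW w) {..<2*w} (op_apply ?H ?o2) (Suc m)"
      by (simp only: g) (rule sum_two, simp)
    also have "\<dots> = 2 ^ m + 2 ^ m" by (simp only: r1 r2 i1 i2)
    finally show "cntR (TW w) {..<2*w} ?H (Suc (Suc m)) = 2 ^ Suc m" by simp
  qed
qed


section \<open>N family\<close>

definition PTN :: "nat \<Rightarrow> nat \<Rightarrow> bool" where "PTN n i = (even i \<and> i < 2*n)"
definition QTN :: "nat \<Rightarrow> nat \<Rightarrow> bool" where "QTN n i = (i = 2*n)"
definition PN :: "nat \<Rightarrow> nat \<Rightarrow> nat \<Rightarrow> bool" where
  "PN n a i = ((even i \<and> i < 2*a) \<or> (odd i \<and> 2*a < i \<and> i < 2*n))"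
definition QN :: "nat \<Rightarrow> nat \<Rightarrow> bool" where "QN a i = (i = 2*a)"

abbreviation TN where "TN n \<equiv> blk (PTN n) (QTN n)"
abbreviation SN where "SN n a \<equiv> blk (PN n a) (QN a)"

lemma TN_Pow: "TN n \<subseteq> Pow {..<2*n+1}"
  by (rule blk_Pow) (auto simp: PTN_def QTN_def elim!: evenE)

lemma finTN: "finite (TN n)" using TN_Pow by (meson finite_Pow_iff finite_lessThan finite_subset)

lemma N_count: "\<forall>a. a + k = n \<longrightarrow> cntR (TN n) {..<2*n+1} (SN n a) k = 1"
proof (induction k)
  case 0
  show ?case
  proof (intro allI impI)
    fix a assume "a + 0 = n"
    then have "SN n a = TN n" by (intro blk_cong) (auto simp: PN_def PTN_def QN_def QTN_def)
    then show "cntR (TN n) {..<2*n+1} (SN n a) 0 = 1" by (simp add: cntR_0)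
  qed
next
  case (Suc k)
  show ?case
  proof (intro allI impI)
    fix a assume an: "a + Suc k = n"
    let ?H = "SN n a"
    let ?o = "CutJoin (2*a+1) (2*a+2) (2*a)"
    have x2: "Suc k \<le> x2 (TN n) ?H"
    proof -
      have "(\<lambda>i. 2*i) ` {a..<n} \<subseteq> {i. PTN n i \<and> \<not> PN n a i}" by (auto simp: PTN_def PN_def)
      then have "card ((\<lambda>i. 2*i) ` {a..<n}) \<le> card {i. PTN n i \<and> \<not> PN n a i}"
        by (rule card_mono[rotated]) (auto simp: PTN_def)
      moreover have "card ((\<lambda>i. 2*i) ` {a..<n}) = Suc k" using an by (simp add: card_image inj_on_def)
      moreover have "card {i. PTN n i \<and> \<not> PN n a i} \<le> x2 (TN n) ?H" by (rule x2_blk) (auto simp: PTN_def)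
      ultimately show ?thesis by simp
    qed
    have g: "good (TN n) {..<2*n+1} ?H = {?o}"
    proof (intro equalityI subsetI)
      fix p assume "p \<in> good (TN n) {..<2*n+1} ?H"
      from good_blk_cases[OF this] show "p \<in> {?o}"
      proof (elim disjE exE conjE)
        fix i assume "PTN n i" "QN a i" "QN a (Suc i)"
        then have False unfolding QN_def by simp
        then show ?thesis ..
      next
        fix x y c j assume "x \<noteq> y" "PN n a j" "{x, y} = pr j" "QN a c" "x = c" "QTN n x"
        then have False using an unfolding QN_def QTN_def by simp
        then show ?thesis ..
      next
        fix x y c j i assume pc: "p = CutJoin x y c" and "x \<noteq> y" "PN n a j" "{x, y} = pr j" "QN a c" "x \<noteq> c" "PTN n i" "{x, c} = pr i"
        note h = this[unfolded PTN_def QN_def PN_def pr_eq]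
        have c: "c = 2*a" using h(5) .
        have x: "x = 2*a+1" by (insert h(6,7,8) c, (elim disjE conjE evenE oddE; arith))
        have "y = 2*a+2" by (insert h(2,3,4) x c, (elim disjE conjE evenE oddE; arith))
        then show ?thesis using x c pc by simp
      qed
    next
      fix p assume "p \<in> {?o}"
      then have p: "p = ?o" by simp
      have "?o \<in> good (TN n) {..<2*n+1} ?H" using an
        by (intro good_cj[where j="2*a+1" and i="2*a"]) (auto simp: PTN_def PN_def QN_def pr_def)
      then show "p \<in> good (TN n) {..<2*n+1} ?H" using p by simp
    qed
    have r: "op_apply ?H ?o = SN n (Suc a)"
      using an by (subst apply_cj[where j="2*a+1" and k="2*a"])
        (auto simp: pr_def intro!: blk_cong simp: PN_def QN_def fun_upd_def elim!: evenE oddE, ((arith)+)?)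
    have i1: "cntR (TN n) {..<2*n+1} (SN n (Suc a)) k = 1" using Suc.IH an by simp
    have "cntR (TN n) {..<2*n+1} ?H (Suc k) = (\<Sum>p\<in>good (TN n) {..<2*n+1} ?H. cntR (TN n) {..<2*n+1} (op_apply ?H p) k)"
      by (rule cntR_good) (use x2 finTN in auto)
    also have "\<dots> = cntR (TN n) {..<2*n+1} (op_apply ?H ?o) k" by (simp only: g) simp
    also have "\<dots> = 1" by (simp only: r i1)
    finally show "cntR (TN n) {..<2*n+1} ?H (Suc k) = 1" .
  qed
qed


section \<open>M family\<close>

definition PTM :: "nat \<Rightarrow> nat \<Rightarrow> bool" where "PTM m i = (odd i \<and> i + 2 < 2*m)"
definition QTM :: "nat \<Rightarrow> nat \<Rightarrow> bool" where "QTM m i = (i = 0 \<or> i + 1 = 2*m)"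
definition PSM :: "nat \<Rightarrow> nat \<Rightarrow> nat \<Rightarrow> nat \<Rightarrow> bool" where
  "PSM m p q i = ((even i \<and> i < 2*p) \<or> (odd i \<and> 2*p < i \<and> i < 2*q) \<or> (even i \<and> 2*q < i \<and> i < 2*m))"
definition QSM :: "nat \<Rightarrow> nat \<Rightarrow> nat \<Rightarrow> bool" where "QSM p q i = (i = 2*p \<or> i = 2*q+1)"

abbreviation TM where "TM m \<equiv> blk (PTM m) (QTM m)"
abbreviation SM where "SM m p q \<equiv> blk (PSM m p q) (QSM p q)"

lemma TM_Pow: "0 < m \<Longrightarrow> TM m \<subseteq> Pow {..<2*m}"
  by (rule blk_Pow) (auto simp: PTM_def QTM_def)

lemma finTM: "0 < m \<Longrightarrow> finite (TM m)" using TM_Pow by (meson finite_Pow_iff finite_lessThan finite_subset)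

lemma M_arith:
  assumes "x \<noteq> y" "PSM m p q j" "x = j \<and> y = Suc j \<or> x = Suc j \<and> y = j" "QSM p q c"
    "(x = c \<and> QTM m x) \<or> (x \<noteq> c \<and> PTM m i \<and> (x = i \<and> c = Suc i \<or> x = Suc i \<and> c = i))"
    "p \<le> q" "q < m"
  shows "(c = 2*p \<and> x + 1 = 2*p \<and> y + 2 = 2*p) \<or> (c = 2*q+1 \<and> x = 2*q+2 \<and> y = 2*q+3)"
proof -
  note h = assms[unfolded PSM_def QSM_def QTM_def PTM_def]
  show ?thesis
  proof (cases "c = 2*p")
    case True
    show ?thesis
    proof (cases "x = c")
      case True
      have False by (insert h(2,3,6,7) True \<open>c = 2*p\<close>, (elim disjE conjE evenE oddE; arith))
      then show ?thesis ..
    next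
      case False
      have x: "x + 1 = 2*p" by (insert h(5) False \<open>c = 2*p\<close>, (elim disjE conjE evenE oddE; arith))
      have "y + 2 = 2*p" by (insert h(2,3,6,7) x, (elim disjE conjE evenE oddE; arith))
      then show ?thesis using x True by simp
    qed
  next
    case False
    then have c: "c = 2*q+1" using h(4) by simp
    show ?thesis
    proof (cases "x = c")
      case True
      have False by (insert h(2,3,6,7) True c, (elim disjE conjE evenE oddE; arith))
      then show ?thesis ..
    next
      case False
      have x: "x = 2*q+2" by (insert h(5) False c, (elim disjE conjE evenE oddE; arith))
      have "y = 2*q+3" by (insert h(2,3,6,7) x, (elim disjE conjE evenE oddE; arith))
      then show ?thesis using x c by simp
    qed
  qed
qed

lemma M_state: "\<forall>p q. p \<le> q \<longrightarrow> q < m \<longrightarrow> p + (m - Suc q) = k \<longrightarrow> cntR (TM m) {..<2*m} (SM m p q) k = k choose p"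
proof (induction k)
  case 0
  show ?case
  proof (intro allI impI)
    fix p q assume a: "p \<le> q" "q < m" "p + (m - Suc q) = 0"
    then have "SM m p q = TM m" by (intro blk_cong) (auto simp: PSM_def PTM_def QSM_def QTM_def elim!: oddE evenE, ((arith)+)?)
    moreover have "p = 0" using a by simp
    ultimately show "cntR (TM m) {..<2*m} (SM m p q) 0 = 0 choose p" by (simp add: cntR_0)
  qed
next
  case (Suc k)
  show ?case
  proof (intro allI impI)
    fix p q assume pq: "p \<le> q" and qm: "q < m" and k: "p + (m - Suc q) = Suc k"
    let ?H = "SM m p q"
    let ?B = "{..<2*m}"
    let ?oL = "CutJoin (2*p-1) (2*p-2) (2*p)"
    let ?oR = "CutJoin (2*q+2) (2*q+3) (2*q+1)"
    let ?L = "if p = 0 then {} else {?oL}"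
    let ?R = "if Suc q < m then {?oR} else {}"
    have m0: "0 < m" using qm by simp
    have x2: "Suc k \<le> x2 (TM m) ?H"
    proof -
      have "(\<lambda>i. 2*i+1) ` ({..<p} \<union> {q..<m - 1}) \<subseteq> {i. PTM m i \<and> \<not> PSM m p q i}"
        using pq qm by (auto simp: PTM_def PSM_def)
      then have "card ((\<lambda>i. 2*i+1) ` ({..<p} \<union> {q..<m - 1})) \<le> card {i. PTM m i \<and> \<not> PSM m p q i}"
        by (rule card_mono[rotated]) (rule finite_subset[of _ "{..<2*m}"], auto simp: PTM_def)
      moreover have "card ((\<lambda>i. 2*i+1) ` ({..<p} \<union> {q..<m - 1})) = Suc k"
      proof -
        have "card ((\<lambda>i. 2*i+1) ` ({..<p} \<union> {q..<m - 1})) = card ({..<p} \<union> {q..<m - 1})"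
          by (rule card_image) (auto simp: inj_on_def)
        also have "\<dots> = card {..<p} + card {q..<m - 1}" using pq by (intro card_Un_disjoint) auto
        finally show ?thesis using k by simp
      qed
      moreover have "card {i. PTM m i \<and> \<not> PSM m p q i} \<le> x2 (TM m) ?H"
        by (rule x2_blk) (rule finite_subset[of _ "{..<2*m}"], auto simp: PTM_def)
      ultimately show ?thesis by simp
    qed
    have g: "good (TM m) ?B ?H = ?L \<union> ?R"
    proof (intro equalityI subsetI)
      fix o' assume "o' \<in> good (TM m) ?B ?H"
      from good_blk_cases[OF this] show "o' \<in> ?L \<union> ?R"
      proof (elim disjE exE conjE)
        fix i assume a: "PTM m i" "QSM p q i" "QSM p q (Suc i)"
        have False by (insert a[unfolded QSM_def PTM_def] pq, (elim disjE conjE evenE oddE; arith))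
        then show ?thesis ..
      next
        fix x y c j assume a: "o' = CutJoin x y c" "x \<noteq> y" "PSM m p q j" "{x, y} = pr j" "QSM p q c" "x = c" "QTM m x"
        then have "(c = 2*p \<and> x + 1 = 2*p \<and> y + 2 = 2*p) \<or> (c = 2*q+1 \<and> x = 2*q+2 \<and> y = 2*q+3)"
          using pq qm by (intro M_arith[where j=j and i=0]) (auto simp: pr_eq)
        then show ?thesis using a(6) by auto
      next
        fix x y c j i assume a: "o' = CutJoin x y c" "x \<noteq> y" "PSM m p q j" "{x, y} = pr j" "QSM p q c" "x \<noteq> c" "PTM m i" "{x, c} = pr i"
        then have e: "(c = 2*p \<and> x + 1 = 2*p \<and> y + 2 = 2*p) \<or> (c = 2*q+1 \<and> x = 2*q+2 \<and> y = 2*q+3)"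
          using pq qm by (intro M_arith[where j=j and i=i]) (auto simp: pr_eq)
        have "Suc q < m" if "c = 2*q+1" "x = 2*q+2"
          using a(7,8) that unfolding PTM_def pr_eq by arith
        then show ?thesis using e a(1) by (auto split: if_splits)
      qed
    next
      fix o' assume o: "o' \<in> ?L \<union> ?R"
      show "o' \<in> good (TM m) ?B ?H"
      proof (cases "o' = ?oL \<and> p \<noteq> 0")
        case True
        have "?oL \<in> good (TM m) ?B ?H" using True pq qm
          by (intro good_cj[where j="2*p-2" and i="2*p-1"]) (auto simp: PTM_def PSM_def QSM_def pr_def)
        then show ?thesis using True by simp
      next
        case False
        then have "o' = ?oR" "Suc q < m" using o by (auto split: if_splits)
        moreover have "?oR \<in> good (TM m) ?B ?H" using \<open>Suc q < m\<close> pq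
          by (intro good_cj[where j="2*q+2" and i="2*q+1"]) (auto simp: PTM_def PSM_def QSM_def pr_def)
        ultimately show ?thesis by simp
      qed
    qed
    have rL: "op_apply ?H ?oL = SM m (p - 1) q" if "p \<noteq> 0"
      using that pq qm by (subst apply_cj[where j="2*p-2" and k="2*p-1"])
        (auto simp: pr_def intro!: blk_cong simp: PSM_def QSM_def fun_upd_def elim!: evenE oddE, ((arith)+)?)
    have rR: "op_apply ?H ?oR = SM m p (Suc q)" if "Suc q < m"
      using that pq qm by (subst apply_cj[where j="2*q+2" and k="2*q+1"])
        (auto simp: pr_def intro!: blk_cong simp: PSM_def QSM_def fun_upd_def elim!: evenE oddE, ((arith)+)?)
    have cL: "cntR (TM m) ?B (SM m (p - 1) q) k = k choose (p - 1)" if "p \<noteq> 0"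
    proof -
      have "p - 1 \<le> q" "p - 1 + (m - Suc q) = k" using that pq k by auto
      then show ?thesis using Suc.IH qm by blast
    qed
    have cR: "cntR (TM m) ?B (SM m p (Suc q)) k = k choose p" if "Suc q < m"
    proof -
      have "p \<le> Suc q" "p + (m - Suc (Suc q)) = k" using that pq k by auto
      then show ?thesis using Suc.IH that by blast
    qed
    have "cntR (TM m) ?B ?H (Suc k) = (\<Sum>o'\<in>good (TM m) ?B ?H. cntR (TM m) ?B (op_apply ?H o') k)"
      by (rule cntR_good) (use x2 finTM[OF m0] in auto)
    also have "\<dots> = (\<Sum>o'\<in>?L. cntR (TM m) ?B (op_apply ?H o') k) + (\<Sum>o'\<in>?R. cntR (TM m) ?B (op_apply ?H o') k)"
      unfolding g by (rule sum.union_disjoint) auto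
    also have "\<dots> = (if p = 0 then 0 else k choose (p - 1)) + (if Suc q < m then k choose p else 0)"
      using rL rR cL cR by simp
    also have "\<dots> = Suc k choose p"
    proof (cases "p = 0")
      case True
      then show ?thesis using k by auto
    next
      case False
      then obtain p' where p': "p = Suc p'" by (cases p) auto
      show ?thesis
      proof (cases "Suc q < m")
        case True
        then show ?thesis using p' by simp
      next
        case False
        then have "p = Suc k" using k qm by simp
        then show ?thesis using p' by simp
      qed
    qed
    finally show "cntR (TM m) ?B ?H (Suc k) = Suc k choose p" .
  qed
qed


lemma valid_TW: "{p \<in> opsB {..<2*m}. op_valid (TW m) p} = (\<lambda>k. Cut (pr (2*k))) ` {..<m}"
proof (intro equalityI subsetI)
  fix p assume "p \<in> {p \<in> opsB {..<2*m}. op_valid (TW m) p}"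
  then have v: "op_valid (TW m) p" by simp
  show "p \<in> (\<lambda>k. Cut (pr (2*k))) ` {..<m}"
  proof (cases p)
    case (Cut s)
    then have "s \<in> TW m" using v by simp
    then obtain i where "s = pr i" "PT m i" by (auto simp: blk_def)
    then show ?thesis using Cut by (auto simp: PT_def elim!: evenE)
  next
    case (Join s)
    then have "card s = 2" "\<forall>x\<in>s. {x} \<in> TW m" using v by auto
    then obtain x where "x \<in> s" by fastforce
    then show ?thesis using \<open>\<forall>x\<in>s. {x} \<in> TW m\<close> by (auto simp: mem_blk_sing)
  next
    case (CutJoin a b c)
    then show ?thesis using v by (auto simp: mem_blk_sing)
  qed
next
  fix p assume "p \<in> (\<lambda>k. Cut (pr (2*k))) ` {..<m}"
  then obtain k where "k < m" "p = Cut (pr (2*k))" by auto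
  moreover have "pr (2*k) \<in> TW m" using \<open>k < m\<close> by (simp add: mem_blk_pr PT_def)
  ultimately show "p \<in> {p \<in> opsB {..<2*m}. op_valid (TW m) p}"
    by (auto simp: opsB_def pr_def)
qed

lemma sum_cuts:
  shows "cntR T {..<2*m} (TW m) (Suc m') = (\<Sum>k<m. cntR T {..<2*m} (op_apply (TW m) (Cut (pr (2*k)))) m')"
proof -
  have "cntR T {..<2*m} (TW m) (Suc m') = (\<Sum>p\<in>{p \<in> opsB {..<2*m}. op_valid (TW m) p}. cntR T {..<2*m} (op_apply (TW m) p) m')"
    by (simp add: cntR_Suc)
  also have "\<dots> = (\<Sum>p\<in>(\<lambda>k. Cut (pr (2*k))) ` {..<m}. cntR T {..<2*m} (op_apply (TW m) p) m')"
    by (simp only: valid_TW)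
  also have "\<dots> = (\<Sum>k<m. cntR T {..<2*m} (op_apply (TW m) (Cut (pr (2*k)))) m')"
    by (rule sum.reindex_cong[where l="\<lambda>k. Cut (pr (2*k))"]) (auto simp: inj_on_def)
  finally show ?thesis .
qed

definition CK :: "nat \<Rightarrow> nat \<Rightarrow> nat set set" where
  "CK c k = blk ((PT c)(2*k := False)) ((\<lambda>_. False)(2*k := True, Suc (2*k) := True))"

lemma cut_TW: "op_apply (TW m) (Cut (pr (2*k))) = CK m k"
  by (simp only: apply_cut CK_def)

lemma M_init:
  assumes "m = Suc m'"
  shows "cntR (TM m) {..<2*m} (TW m) m = 2 ^ m'"
proof -
  have "cntR (TM m) {..<2*m} (TW m) m = (\<Sum>k<m. cntR (TM m) {..<2*m} (CK m k) m')"
    using sum_cuts[of "TM m" m m'] assms by (simp only: cut_TW)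
  also have "\<dots> = (\<Sum>k<m. m' choose k)"
  proof (rule sum.cong)
    fix k assume k: "k \<in> {..<m}"
    have "CK m k = SM m k k" unfolding CK_def
      using k by (intro blk_cong) (auto simp: PT_def PSM_def QSM_def elim!: evenE oddE, ((arith)+)?)
    moreover have "cntR (TM m) {..<2*m} (SM m k k) m' = m' choose k"
      using M_state[of m "m'"] k assms by auto
    ultimately show "cntR (TM m) {..<2*m} (CK m k) m' = m' choose k" by simp
  qed simp
  also have "\<dots> = 2 ^ m'" using assms by (simp add: lessThan_Suc_atMost choose_row_sum)
  finally show ?thesis .
qed

section \<open>Crown via rotation\<close>

definition TC :: "nat \<Rightarrow> nat set set" where
  "TC c = insert {2*c - 1, 0} (blk (\<lambda>j. odd j \<and> j + 2 < 2*c) (\<lambda>_. False))"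

definition rot :: "nat \<Rightarrow> nat \<Rightarrow> nat \<Rightarrow> nat" where
  "rot c k i = (if i + 2*k + 1 < 2*c then i + 2*k + 1 else i + 2*k + 1 - 2*c)"

definition urot :: "nat \<Rightarrow> nat \<Rightarrow> nat \<Rightarrow> nat" where
  "urot c k i = (if 2*k + 1 \<le> i then i - (2*k + 1) else i + 2*c - (2*k + 1))"

lemma rot_urot: "k < c \<Longrightarrow> i < 2*c \<Longrightarrow> rot c k (urot c k i) = i \<and> urot c k i < 2*c"
  unfolding rot_def urot_def by auto

lemma rot_lt: "k < c \<Longrightarrow> i < 2*c \<Longrightarrow> rot c k i < 2*c"
  unfolding rot_def by auto

lemma inj_rot: "k < c \<Longrightarrow> inj_on (rot c k) {..<2*c}"
  unfolding inj_on_def rot_def by auto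

lemma rot_image: "k < c \<Longrightarrow> rot c k ` {..<2*c} = {..<2*c}"
proof (intro equalityI subsetI)
  fix x assume "k < c" "x \<in> rot c k ` {..<2*c}"
  then show "x \<in> {..<2*c}" using rot_lt by auto
next
  fix x assume "k < c" "x \<in> {..<2*c}"
  then show "x \<in> rot c k ` {..<2*c}" using rot_urot[of k c x] by (metis imageI lessThan_iff)
qed

lemma img_blk:
  assumes "\<And>j. P j \<Longrightarrow> f (Suc j) = Suc (f j)"
    "\<And>i. P' i = (\<exists>j. P j \<and> i = f j)" "\<And>i. Q' i = (\<exists>j. Q j \<and> i = f j)"
  shows "img f (blk P Q) = blk P' Q'"
proof -
  have "img f (blk P Q) = {f ` pr j | j. P j} \<union> {{f i} | i. Q i}"
    unfolding img_def blk_def by auto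
  also have "{f ` pr j | j. P j} = {pr (f j) | j. P j}"
    using assms(1) by (auto simp: pr_def)
  finally show ?thesis unfolding blk_def using assms(2,3) by auto
qed

lemma img_insert: "img f (insert u X) = insert (f ` u) (img f X)" by (simp add: img_def)

lemma rot_SW:
  assumes k: "k < c"
  shows "img (rot c k) (SW c 0 c) = CK c k"
  unfolding CK_def
proof (rule img_blk)
  fix j assume "PW c 0 c j"
  then show "rot c k (Suc j) = Suc (rot c k j)" unfolding PW_def rot_def
    by (auto elim!: evenE oddE, ((arith)+)?)
next
  fix i
  show "((PT c)(2*k := False)) i = (\<exists>j. PW c 0 c j \<and> i = rot c k j)"
  proof
    assume a: "((PT c)(2*k := False)) i"
    then have i: "i < 2*c" "even i" "i \<noteq> 2*k" by (auto simp: PT_def split: if_splits)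
    have "PW c 0 c (urot c k i)" using i k unfolding PW_def urot_def by (auto elim!: evenE, ((arith)+)?)
    moreover have "i = rot c k (urot c k i)" using rot_urot[OF k i(1)] by simp
    ultimately show "\<exists>j. PW c 0 c j \<and> i = rot c k j" by blast
  next
    assume "\<exists>j. PW c 0 c j \<and> i = rot c k j"
    then obtain j where j: "PW c 0 c j" "i = rot c k j" by blast
    have jo: "odd j" "j + 2 < 2*c" using j(1) by (auto simp: PW_def)
    then obtain l where l: "j = 2*l+1" by (auto elim: oddE)
    have ilt: "i < 2*c" using j(2) jo rot_lt[OF k, of j] by simp
    have ie: "i = 2*(if l + k + 1 < c then l + k + 1 else l + k + 1 - c)"
      using j(2) l by (simp add: rot_def right_diff_distrib')
    have "i \<noteq> 2*k" using ie jo(2) l by (auto split: if_splits)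
    then show "((PT c)(2*k := False)) i" using ie ilt by (simp add: PT_def)
  qed
next
  fix i
  show "((\<lambda>_. False)(2*k := True, Suc (2*k) := True)) i = (\<exists>j. QW 0 c j \<and> i = rot c k j)"
  proof
    assume "((\<lambda>_. False)(2*k := True, Suc (2*k) := True)) i"
    then have "i = 2*k \<or> i = Suc (2*k)" by (auto split: if_splits)
    then show "\<exists>j. QW 0 c j \<and> i = rot c k j"
    proof
      assume "i = 2*k"
      then have "QW 0 c (2*c - 1) \<and> i = rot c k (2*c - 1)" using k by (auto simp: QW_def rot_def)
      then show ?thesis by blast
    next
      assume "i = Suc (2*k)"
      then have "QW 0 c 0 \<and> i = rot c k 0" using k by (auto simp: QW_def rot_def)
      then show ?thesis by blast
    qed
  next
    assume "\<exists>j. QW 0 c j \<and> i = rot c k j"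
    then show "((\<lambda>_. False)(2*k := True, Suc (2*k) := True)) i" using k
      unfolding QW_def rot_def by auto
  qed
qed

lemma rot_TW:
  assumes k: "k < c"
  shows "img (rot c k) (TW c) = TC c"
proof -
  let ?i0 = "2*(c - k - 1)"
  have "TW c = insert (pr ?i0) (blk ((PT c)(?i0 := False)) (\<lambda>_. False))"
    using k by (simp only: blk_plus_pr) (intro blk_cong, auto simp: PT_def)
  then have "img (rot c k) (TW c) = insert (rot c k ` pr ?i0) (img (rot c k) (blk ((PT c)(?i0 := False)) (\<lambda>_. False)))"
    by (simp add: img_insert)
  also have "rot c k ` pr ?i0 = {2*c - 1, 0}" using k by (auto simp: pr_def rot_def)
  also have "img (rot c k) (blk ((PT c)(?i0 := False)) (\<lambda>_. False)) = blk (\<lambda>j. odd j \<and> j + 2 < 2*c) (\<lambda>_. False)"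
  proof (rule img_blk)
    fix j assume "((PT c)(?i0 := False)) j"
    then show "rot c k (Suc j) = Suc (rot c k j)" using k unfolding PT_def rot_def
      by (auto split: if_splits elim!: evenE, ((arith)+)?)
  next
    fix i
    show "(odd i \<and> i + 2 < 2*c) = (\<exists>j. ((PT c)(?i0 := False)) j \<and> i = rot c k j)"
    proof
      assume i: "odd i \<and> i + 2 < 2*c"
      have "((PT c)(?i0 := False)) (urot c k i)" using i k unfolding PT_def urot_def
        by (auto elim!: oddE, ((arith)+)?)
      moreover have "i = rot c k (urot c k i)" using rot_urot[OF k, of i] i by simp
      ultimately show "\<exists>j. ((PT c)(?i0 := False)) j \<and> i = rot c k j" by blast
    next
      assume "\<exists>j. ((PT c)(?i0 := False)) j \<and> i = rot c k j"
      then obtain j where j: "((PT c)(?i0 := False)) j" "i = rot c k j" by blast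
      then show "odd i \<and> i + 2 < 2*c" using k unfolding PT_def rot_def
        by (auto split: if_splits elim!: evenE, ((arith)+)?)
    qed
  qed simp
  finally show ?thesis by (simp add: TC_def)
qed


lemma SW_Pow: "SW w a b \<subseteq> Pow {..<2*w}" if "b \<le> w" "a < b"
  using that by (intro blk_Pow) (auto simp: PW_def QW_def)

lemma W_init: "w = Suc w' \<Longrightarrow> cntR (TW w) {..<2*w} (SW w 0 w) w = 2 ^ w'"
  using W_count[of w' w] by simp

lemma crown_nat:
  assumes c: "c = Suc c'"
  shows "cntR (TC c) {..<2*c} (TW c) (Suc c) = c * 2 ^ c'"
proof -
  have "cntR (TC c) {..<2*c} (TW c) (Suc c) = (\<Sum>k<c. cntR (TC c) {..<2*c} (CK c k) c)"
    using sum_cuts[of "TC c" c c] by (simp only: cut_TW)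
  also have "\<dots> = (\<Sum>k<c. 2 ^ c')"
  proof (rule sum.cong)
    fix k assume "k \<in> {..<c}"
    then have k: "k < c" by simp
    have "cntR (TC c) {..<2*c} (CK c k) c =
        cntR (img (rot c k) (TW c)) (rot c k ` {..<2*c}) (img (rot c k) (SW c 0 c)) c"
      by (simp only: rot_SW[OF k] rot_TW[OF k] rot_image[OF k])
    also have "\<dots> = cntR (TW c) {..<2*c} (SW c 0 c) c"
    proof (rule cntR_transfer[OF inj_rot[OF k]])
      show "SW c 0 c \<subseteq> Pow {..<2*c}" using c by (intro SW_Pow) auto
      show "TW c \<subseteq> Pow {..<2*c}" by (rule TW_Pow)
    qed simp
    also have "\<dots> = 2 ^ c'" using W_init[OF c] .
    finally show "cntR (TC c) {..<2*c} (CK c k) c = 2 ^ c'" .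
  qed simp
  finally show ?thesis by simp
qed


definition sd :: "bool \<Rightarrow> nat \<Rightarrow> bool" where "sd s k = (if even k then s else \<not> s)"

definition npath :: "nat \<Rightarrow> bool \<Rightarrow> bool \<Rightarrow> nat \<Rightarrow> nat" where
  "npath L s b k = (if sd s k = b then (if Suc k < L then Suc k else k) else (if 0 < k then k - 1 else k))"

definition ncyc :: "nat \<Rightarrow> bool \<Rightarrow> bool \<Rightarrow> nat \<Rightarrow> nat" where
  "ncyc L s b k = (if sd s k = b then (if Suc k < L then Suc k else 0) else (if 0 < k then k - 1 else L - 1))"

definition NB :: "(nat \<Rightarrow> nat) \<Rightarrow> nat \<Rightarrow> nat set set" where
  "NB f L = {{k, f k} | k. k < L}"

lemma par_simps[simp]:
  "(Suc (2*j) < 2*w) = (j < w)"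
  "(Suc (Suc (2*j)) < 2*w) = (Suc j < w)"
  "(Suc (Suc (Suc (2*j))) < 2*w) = (Suc j < w)"
  "(2*j = Suc (2*w)) = False"
  "(Suc (2*j) = 2*w) = False"
  "(2*w \<le> Suc (2*j)) = (w \<le> j)"
  "(2*w \<le> Suc (Suc (2*j))) = (w \<le> Suc j)"
  for j w :: nat
  by presburger+

lemma blocks_eq:
  assumes "\<And>k. k < L \<Longrightarrow> {k, f k} \<in> blk P Q"
    "\<And>i. P i \<Longrightarrow> \<exists>k<L. {k, f k} = pr i"
    "\<And>i. Q i \<Longrightarrow> \<exists>k<L. {k, f k} = {i}"
  shows "NB f L = blk P Q"
proof (intro equalityI subsetI)
  fix u assume "u \<in> NB f L"
  then show "u \<in> blk P Q" using assms(1) by (auto simp: NB_def)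
next
  fix u assume "u \<in> blk P Q"
  then consider i where "P i" "u = pr i" | i where "Q i" "u = {i}" by (auto simp: blk_def)
  then show "u \<in> NB f L"
  proof cases
    case 1 then show ?thesis using assms(2)[of i] by (auto simp: NB_def)
  next
    case 2 then show ?thesis using assms(3)[of i] by (auto simp: NB_def)
  qed
qed

lemma in_blk_up: "P k \<Longrightarrow> f k = Suc k \<Longrightarrow> {k, f k} \<in> blk P Q" by (metis mem_blk_pr pr_def)
lemma in_blk_down: "P j \<Longrightarrow> k = Suc j \<Longrightarrow> f k = j \<Longrightarrow> {k, f k} \<in> blk P Q"
  by (metis insert_commute mem_blk_pr pr_def)
lemma in_blk_self: "Q k \<Longrightarrow> f k = k \<Longrightarrow> {k, f k} \<in> blk P Q" by (simp add: mem_blk_sing)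

lemma ex_up: "i < L \<Longrightarrow> f i = Suc i \<Longrightarrow> \<exists>k<L. {k, f k} = pr i" by (auto simp: pr_def)
lemma ex_self: "i < L \<Longrightarrow> f i = i \<Longrightarrow> \<exists>k<L. {k, f k} = {i}" by auto

lemma nat_cases3:
  fixes k :: nat
  obtains "k = 0" | j where "k = 2*j + 2" | j where "k = 2*j + 1"
proof (cases "even k")
  case True
  then obtain j where j: "k = 2*j" by (auto elim: evenE)
  show ?thesis
  proof (cases j)
    case 0 then show ?thesis using that j by simp
  next
    case (Suc j') then show ?thesis using that(2)[of j'] j by simp
  qed
next
  case False
  then obtain j where "k = 2*j + 1" by (auto elim: oddE)
  then show ?thesis using that by blast
qed

lemma W_G1: assumes w: "0 < w" shows "NB (npath (2*w) False True) (2*w) = SW w 0 w"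
proof (rule blocks_eq)
  fix k assume k: "k < 2*w"
  show "{k, npath (2*w) False True k} \<in> SW w 0 w"
  proof (cases k rule: nat_cases3)
    case 1 then show ?thesis by (intro in_blk_self) (auto simp: npath_def sd_def QW_def)
  next
    case (2 j)
    show ?thesis using k 2
      by (intro in_blk_down[where j="2*j+1"]) (auto simp: npath_def sd_def PW_def)
  next
    case (3 j) show ?thesis
    proof (cases "Suc k < 2*w")
      case True then show ?thesis using 3
        by (intro in_blk_up) (auto simp: npath_def sd_def PW_def)
    next
      case False then show ?thesis using 3 k
        by (intro in_blk_self) (auto simp: npath_def sd_def QW_def)
    qed
  qed
next
  fix i assume "PW w 0 w i"
  then obtain j where "i = 2*j+1" "2*j + 3 < 2*w" by (auto simp: PW_def elim!: oddE)
  then show "\<exists>k<2*w. {k, npath (2*w) False True k} = pr i" by (intro ex_up) (auto simp: npath_def sd_def)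
next
  fix i assume "QW 0 w i"
  then have "i = 0 \<or> i + 1 = 2*w" by (simp add: QW_def)
  then show "\<exists>k<2*w. {k, npath (2*w) False True k} = {i}"
  proof
    assume "i = 0" then show ?thesis using \<open>QW 0 w i\<close> w by (intro ex_self) (auto simp: QW_def npath_def sd_def)
  next
    assume a: "i + 1 = 2*w"
    then obtain w' where "w = Suc w'" "i = 2*w' + 1" by (cases w) auto
    then show ?thesis by (intro ex_self) (auto simp: npath_def sd_def)
  qed
qed


lemma W_G2: assumes w: "0 < w" shows "NB (npath (2*w) False False) (2*w) = TW w"
proof (rule blocks_eq)
  fix k assume k: "k < 2*w"
  show "{k, npath (2*w) False False k} \<in> TW w"
  proof (cases k rule: nat_cases3)
    case 1 then show ?thesis using w by (intro in_blk_up) (auto simp: npath_def sd_def PT_def)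
  next
    case (2 j) then show ?thesis using k by (intro in_blk_up) (auto simp: npath_def sd_def PT_def)
  next
    case (3 j) then show ?thesis using k
      by (intro in_blk_down[where j="2*j"]) (auto simp: npath_def sd_def PT_def)
  qed
next
  fix i assume "PT w i"
  then obtain j where "i = 2*j" "j < w" by (auto simp: PT_def elim!: evenE)
  then show "\<exists>k<2*w. {k, npath (2*w) False False k} = pr i" by (intro ex_up) (auto simp: npath_def sd_def)
qed simp

lemma N_G1: "NB (npath (2*n+1) False True) (2*n+1) = SN n 0"
proof (rule blocks_eq)
  fix k assume k: "k < 2*n+1"
  show "{k, npath (2*n+1) False True k} \<in> SN n 0"
  proof (cases k rule: nat_cases3)
    case 1 then show ?thesis by (intro in_blk_self) (auto simp: npath_def sd_def QN_def)
  next
    case (2 j) then show ?thesis using k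
      by (intro in_blk_down[where j="2*j+1"]) (auto simp: npath_def sd_def PN_def)
  next
    case (3 j) then show ?thesis using k
      by (intro in_blk_up) (auto simp: npath_def sd_def PN_def)
  qed
next
  fix i assume "PN n 0 i"
  then obtain j where "i = 2*j+1" "2*j + 1 < 2*n" by (auto simp: PN_def elim!: oddE)
  then show "\<exists>k<2*n+1. {k, npath (2*n+1) False True k} = pr i" by (intro ex_up) (auto simp: npath_def sd_def)
next
  fix i assume "QN 0 i"
  then show "\<exists>k<2*n+1. {k, npath (2*n+1) False True k} = {i}" by (intro ex_self) (auto simp: npath_def sd_def QN_def)
qed

lemma N_G2: "NB (npath (2*n+1) False False) (2*n+1) = TN n"
proof (rule blocks_eq)
  fix k assume k: "k < 2*n+1"
  show "{k, npath (2*n+1) False False k} \<in> TN n"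
  proof (cases k rule: nat_cases3)
    case 1 then show ?thesis
    proof (cases "n = 0")
      case True then show ?thesis using 1 by (intro in_blk_self) (auto simp: npath_def sd_def QTN_def)
    next
      case False then show ?thesis using 1 by (intro in_blk_up) (auto simp: npath_def sd_def PTN_def)
    qed
  next
    case (2 j) show ?thesis
    proof (cases "Suc j < n")
      case True then show ?thesis using 2 by (intro in_blk_up) (auto simp: npath_def sd_def PTN_def)
    next
      case False then have "j + 1 = n" using k 2 by simp
      then show ?thesis using 2 by (intro in_blk_self) (auto simp: npath_def sd_def QTN_def)
    qed
  next
    case (3 j) then show ?thesis using k
      by (intro in_blk_down[where j="2*j"]) (auto simp: npath_def sd_def PTN_def)
  qed
next
  fix i assume "PTN n i"
  then obtain j where "i = 2*j" "j < n" by (auto simp: PTN_def elim!: evenE)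
  then show "\<exists>k<2*n+1. {k, npath (2*n+1) False False k} = pr i" by (intro ex_up) (auto simp: npath_def sd_def)
next
  fix i assume "QTN n i"
  then show "\<exists>k<2*n+1. {k, npath (2*n+1) False False k} = {i}" by (intro ex_self) (auto simp: npath_def sd_def QTN_def)
qed

lemma npath_swap: "npath L True b = npath L False (\<not> b)"
  by (auto simp: npath_def sd_def fun_eq_iff)

lemma M_G1: "0 < m \<Longrightarrow> NB (npath (2*m) True True) (2*m) = TW m"
  by (simp add: npath_swap W_G2)

lemma M_G2: "0 < m \<Longrightarrow> NB (npath (2*m) True False) (2*m) = TM m"
proof -
  assume m: "0 < m"
  have "NB (npath (2*m) True False) (2*m) = SW m 0 m" using m by (simp add: npath_swap W_G1)
  also have "\<dots> = TM m" by (intro blk_cong) (auto simp: PW_def QW_def PTM_def QTM_def elim!: oddE)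
  finally show ?thesis .
qed

lemma NB_cong: "(\<And>k. k < L \<Longrightarrow> f k = g k) \<Longrightarrow> NB f L = NB g L"
  unfolding NB_def by force

lemma ncyc_G1: "0 < c \<Longrightarrow> k < 2*c \<Longrightarrow> ncyc (2*c) True True k = npath (2*c) True True k"
  by (cases k rule: nat_cases3) (auto simp: ncyc_def npath_def sd_def)

lemma C_G1: "0 < c \<Longrightarrow> NB (ncyc (2*c) True True) (2*c) = TW c"
proof -
  assume "0 < c"
  then have "NB (ncyc (2*c) True True) (2*c) = NB (npath (2*c) True True) (2*c)" by (intro NB_cong ncyc_G1)
  then show ?thesis using M_G1[OF \<open>0 < c\<close>] by simp
qed

lemma C_G2: "0 < c \<Longrightarrow> NB (ncyc (2*c) True False) (2*c) = TC c"
proof (intro equalityI subsetI)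
  fix u assume c: "0 < c" and "u \<in> NB (ncyc (2*c) True False) (2*c)"
  then obtain k where k: "k < 2*c" "u = {k, ncyc (2*c) True False k}" by (auto simp: NB_def)
  show "u \<in> TC c"
  proof (cases k rule: nat_cases3)
    case 1 then show ?thesis using k c by (auto simp: ncyc_def sd_def TC_def)
  next
    case (2 j)
    then have "u = pr (2*j+1)" using k by (auto simp: ncyc_def sd_def pr_def)
    moreover have "2*j+1 + 2 < 2*c" using k 2 by simp
    ultimately show ?thesis by (simp add: TC_def mem_blk_pr)
  next
    case (3 j) show ?thesis
    proof (cases "Suc k < 2*c")
      case True
      then have "u = pr (2*j+1)" using k 3 by (auto simp: ncyc_def sd_def pr_def)
      moreover have "2*j+1 + 2 < 2*c" using True 3 by simp
      ultimately show ?thesis by (simp add: TC_def mem_blk_pr)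
    next
      case False
      then have "u = {2*c - 1, 0}" using k 3 by (auto simp: ncyc_def sd_def)
      then show ?thesis by (simp add: TC_def)
    qed
  qed
next
  fix u assume c: "0 < c" and "u \<in> TC c"
  then consider "u = {2*c - 1, 0}" | i where "odd i" "i + 2 < 2*c" "u = pr i"
    by (auto simp: TC_def blk_def)
  then show "u \<in> NB (ncyc (2*c) True False) (2*c)"
  proof cases
    case 1
    have "ncyc (2*c) True False 0 = 2*c - 1" by (simp add: ncyc_def sd_def)
    then have "u = {0, ncyc (2*c) True False 0}" using 1 by auto
    then show ?thesis using c by (auto simp: NB_def)
  next
    case 2
    then obtain j where j: "i = 2*j+1" by (auto elim: oddE)
    have "u = {i, ncyc (2*c) True False i}" using 2 j by (auto simp: ncyc_def sd_def pr_def)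
    then show ?thesis using 2 by (auto simp: NB_def)
  qed
qed


definition part :: "'e set \<Rightarrow> 'e set set \<Rightarrow> bool" where
  "part E G \<longleftrightarrow> \<Union>G = E \<and> (\<forall>u\<in>G. card u = 1 \<or> card u = 2) \<and> (\<forall>u\<in>G. \<forall>v\<in>G. u \<noteq> v \<longrightarrow> u \<inter> v = {})"

definition blkof :: "'e set set \<Rightarrow> 'e \<Rightarrow> 'e set" where
  "blkof G x = (THE u. u \<in> G \<and> x \<in> u)"

definition nb :: "'e set set \<Rightarrow> 'e \<Rightarrow> 'e" where
  "nb G x = (SOME y. blkof G x = {x, y})"

lemma part_uniq: "part E G \<Longrightarrow> u \<in> G \<Longrightarrow> v \<in> G \<Longrightarrow> x \<in> u \<Longrightarrow> x \<in> v \<Longrightarrow> u = v"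
  unfolding part_def by blast

lemma blkof_eq: assumes "part E G" "u \<in> G" "x \<in> u" shows "blkof G x = u"
  unfolding blkof_def using assms part_uniq[OF assms(1)] by (intro the_equality) auto

lemma blkof_in: assumes "part E G" "x \<in> E" shows "blkof G x \<in> G \<and> x \<in> blkof G x"
proof -
  obtain u where "u \<in> G" "x \<in> u" using assms by (auto simp: part_def)
  then show ?thesis using blkof_eq[OF assms(1)] by simp
qed

lemma part_card: "part E G \<Longrightarrow> u \<in> G \<Longrightarrow> card u = 1 \<or> card u = 2"
  unfolding part_def by blast

lemma part_sub: "part E G \<Longrightarrow> u \<in> G \<Longrightarrow> u \<subseteq> E"
  unfolding part_def by blast

lemma nb_blk: assumes "part E G" "x \<in> E" shows "blkof G x = {x, nb G x}"
proof -
  have u: "blkof G x \<in> G" "x \<in> blkof G x" using blkof_in[OF assms] by auto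
  have "\<exists>y. blkof G x = {x, y}"
  proof (cases "card (blkof G x) = 1")
    case True
    then obtain z where "blkof G x = {z}" by (auto simp: card_1_singleton_iff)
    then show ?thesis using u by auto
  next
    case False
    then have "card (blkof G x) = 2" using part_card[OF assms(1) u(1)] by simp
    then obtain a b where ab: "blkof G x = {a, b}" "a \<noteq> b" by (auto simp: card_2_iff)
    then show ?thesis using u by (metis insertE insert_commute singletonD)
  qed
  then show ?thesis unfolding nb_def by (rule someI_ex)
qed

lemma nb_in: assumes "part E G" "x \<in> E" shows "nb G x \<in> E"
  using nb_blk[OF assms] blkof_in[OF assms] part_sub[OF assms(1)] by blast

lemma nb_nb: assumes "part E G" "x \<in> E" shows "nb G (nb G x) = x"
proof -
  have y: "nb G x \<in> E" by (rule nb_in[OF assms])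
  have "blkof G (nb G x) = blkof G x"
    using blkof_in[OF assms] nb_blk[OF assms] by (intro blkof_eq[OF assms(1)]) auto
  then have "{nb G x, nb G (nb G x)} = {x, nb G x}" using nb_blk[OF assms(1) y] nb_blk[OF assms] by simp
  then show ?thesis by (metis doubleton_eq_iff)
qed

lemma mem_blk_nb: assumes "part E G" "x \<in> E" "u \<in> G" "x \<in> u" shows "u = {x, nb G x}"
  using blkof_eq[OF assms(1,3,4)] nb_blk[OF assms(1,2)] by simp

lemma sing_iff: assumes "part E G" "x \<in> E" shows "({x} \<in> G) = (nb G x = x)"
proof
  assume "{x} \<in> G" then show "nb G x = x" using mem_blk_nb[OF assms, of "{x}"] by auto
next
  assume "nb G x = x" then show "{x} \<in> G" using nb_blk[OF assms] blkof_in[OF assms] by simp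
qed

locale twop =
  fixes E :: "'e set" and G1 G2 :: "'e set set"
  assumes p1: "part E G1" and p2: "part E G2" and fin: "finite E"
begin

definition nbs :: "bool \<Rightarrow> 'e \<Rightarrow> 'e" where "nbs b = (if b then nb G1 else nb G2)"

lemma nbs_in: "x \<in> E \<Longrightarrow> nbs b x \<in> E"
  using nb_in[OF p1] nb_in[OF p2] by (auto simp: nbs_def)

lemma nbs_nbs: "x \<in> E \<Longrightarrow> nbs b (nbs b x) = x"
  using nb_nb[OF p1] nb_nb[OF p2] by (auto simp: nbs_def)

lemma link_iff: "x \<in> E \<Longrightarrow> ((x, y) \<in> link G1 G2) = (y = x \<or> y = nb G1 x \<or> y = nb G2 x)"
proof -
  assume x: "x \<in> E"
  have "((x, y) \<in> link G1 G2) = (y \<in> blkof G1 x \<or> y \<in> blkof G2 x)"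
  proof
    assume "(x, y) \<in> link G1 G2"
    then obtain u where u: "u \<in> G1 \<or> u \<in> G2" "x \<in> u" "y \<in> u" unfolding link_def by blast
    then show "y \<in> blkof G1 x \<or> y \<in> blkof G2 x"
      using blkof_eq[OF p1, of u x] blkof_eq[OF p2, of u x] by blast
  next
    assume "y \<in> blkof G1 x \<or> y \<in> blkof G2 x"
    then show "(x, y) \<in> link G1 G2"
      using blkof_in[OF p1 x] blkof_in[OF p2 x] unfolding link_def by blast
  qed
  then show ?thesis using nb_blk[OF p1 x] nb_blk[OF p2 x] by auto
qed

lemma link_E: "(x, y) \<in> link G1 G2 \<Longrightarrow> x \<in> E \<and> y \<in> E"
proof -
  assume "(x, y) \<in> link G1 G2"
  then obtain u where "u \<in> G1 \<or> u \<in> G2" "x \<in> u" "y \<in> u" unfolding link_def by blast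
  then show ?thesis using part_sub[OF p1] part_sub[OF p2] by blast
qed

fun walk :: "'e \<Rightarrow> bool \<Rightarrow> nat \<Rightarrow> 'e" where
  "walk t s 0 = t"
| "walk t s (Suc k) = nbs (sd s k) (walk t s k)"

lemma walk_in: "t \<in> E \<Longrightarrow> walk t s k \<in> E"
  by (induction k) (auto intro: nbs_in)

lemma walk_back: "t \<in> E \<Longrightarrow> nbs (sd s k) (walk t s (Suc k)) = walk t s k"
  using nbs_nbs[OF walk_in] by simp

lemma sd_Suc[simp]: "sd s (Suc k) = (\<not> sd s k)" by (simp add: sd_def)
lemma sd_SS: "sd s (Suc (Suc k)) = sd s k" by simp
lemma sd_0[simp]: "sd s 0 = s" by (simp add: sd_def)

lemma link_nbs: "x \<in> E \<Longrightarrow> (x, nbs b x) \<in> link G1 G2"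
  using link_iff by (auto simp: nbs_def)

lemma walk_reach: "t \<in> E \<Longrightarrow> walk t s k \<in> (link G1 G2)\<^sup>* `` {t}"
proof (induction k)
  case 0 then show ?case by simp
next
  case (Suc k)
  then have "(t, walk t s k) \<in> (link G1 G2)\<^sup>*" by simp
  moreover have "(walk t s k, walk t s (Suc k)) \<in> link G1 G2" using link_nbs walk_in Suc by simp
  ultimately show ?case by (simp add: rtrancl_into_rtrancl)
qed

definition LL :: "'e \<Rightarrow> bool \<Rightarrow> nat" where
  "LL t s = (LEAST j. \<exists>i<j. walk t s i = walk t s j)"

lemma rep_ex: assumes "t \<in> E" shows "\<exists>j. \<exists>i<j. walk t s i = walk t s j"
proof (rule ccontr)
  assume na: "\<not> ?thesis"
  have "inj_on (walk t s) {..card E}"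
  proof (rule inj_onI)
    fix a b assume "walk t s a = walk t s b"
    then show "a = b" using na by (metis linorder_neqE_nat)
  qed
  then have "card (walk t s ` {..card E}) = Suc (card E)" by (simp add: card_image)
  moreover have "walk t s ` {..card E} \<subseteq> E" using walk_in[OF assms] by auto
  then have "card (walk t s ` {..card E}) \<le> card E" by (rule card_mono[OF fin])
  ultimately show False by simp
qed

lemma LL_rep: assumes "t \<in> E" shows "\<exists>i<LL t s. walk t s i = walk t s (LL t s)"
  unfolding LL_def by (rule LeastI_ex) (rule rep_ex[OF assms])

lemma LL_inj: "t \<in> E \<Longrightarrow> inj_on (walk t s) {..<LL t s}"
proof (rule inj_onI, rule ccontr)
  fix a b assume t: "t \<in> E" and a: "a \<in> {..<LL t s}" and b: "b \<in> {..<LL t s}" and e: "walk t s a = walk t s b" and ne: "a \<noteq> b"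
  show False
  proof (cases "a < b")
    case True
    have "\<exists>i<b. walk t s i = walk t s b" using True e by blast
    then have "LL t s \<le> b" unfolding LL_def by (rule Least_le)
    then show False using b by simp
  next
    case False
    then have "b < a" using ne by simp
    then have "\<exists>i<a. walk t s i = walk t s a" using e by metis
    then have "LL t s \<le> a" unfolding LL_def by (rule Least_le)
    then show False using a by simp
  qed
qed

lemma LL_pos: "t \<in> E \<Longrightarrow> 0 < LL t s"
  using LL_rep[of t s] by auto

lemma rep_pos:
  assumes t: "t \<in> E" and i: "i = Suc i'" "i < LL t s" and e: "walk t s i = walk t s (LL t s)"
  shows "Suc i = LL t s"
proof (rule ccontr)
  assume ne: "Suc i \<noteq> LL t s"
  obtain L' where L: "LL t s = Suc L'" using LL_pos[OF t, of s] by (cases "LL t s") auto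
  have iL: "i < L'" using i ne L by simp
  have inj: "inj_on (walk t s) {..<LL t s}" by (rule LL_inj[OF t])
  have w1: "walk t s i' = nbs (sd s i') (walk t s (LL t s))" using walk_back[OF t, of s i'] e i by simp
  have w2: "walk t s L' = nbs (sd s L') (walk t s (LL t s))" using walk_back[OF t, of s L'] L by simp
  show False
  proof (cases "sd s L' = sd s i'")
    case True
    then have "walk t s L' = walk t s i'" using w1 w2 by simp
    then have "L' = i'" using inj L iL i by (auto simp: inj_on_def)
    then show False using iL i by simp
  next
    case False
    then have "sd s L' = sd s i" using i by auto
    then have "walk t s L' = walk t s (Suc i)" using w2 e by simp
    moreover have "Suc i < LL t s" using iL L by simp
    ultimately have "L' = Suc i" using inj L by (auto simp: inj_on_def)
    then have "sd s L' = sd s i'" using i by simp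
    then show False using False by simp
  qed
qed

end


context twop
begin

lemma path_end:
  assumes t: "t \<in> E" and fx: "nbs (\<not> s) t = t"
  shows "walk t s (LL t s) = walk t s (LL t s - 1)"
proof -
  obtain i where i: "i < LL t s" "walk t s i = walk t s (LL t s)" using LL_rep[OF t] by blast
  obtain L' where L: "LL t s = Suc L'" using LL_pos[OF t, of s] by (cases "LL t s") auto
  have inj: "inj_on (walk t s) {..<LL t s}" by (rule LL_inj[OF t])
  show ?thesis
  proof (cases i)
    case (Suc i')
    then have "Suc i = LL t s" using rep_pos[OF t Suc i(1) i(2)] by simp
    then have "LL t s - 1 = i" by simp
    then show ?thesis using i(2) by simp
  next
    case 0
    then have e: "walk t s (LL t s) = t" using i by simp
    have "L' = 0"
    proof (rule ccontr)
      assume L0: "L' \<noteq> 0"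
      have w: "walk t s L' = nbs (sd s L') t" using walk_back[OF t, of s L'] L e by simp
      show False
      proof (cases "sd s L' = s")
        case False
        then have "walk t s L' = walk t s 0" using w fx by simp
        then have "L' = 0" using inj L by (auto simp: inj_on_def)
        then show False using L0 by simp
      next
        case True
        then have "walk t s L' = walk t s 1" using w by simp
        show False
        proof (cases "L' = 1")
          case True then show False using \<open>sd s L' = s\<close> by simp
        next
          case False
          then have "L' = 1" using \<open>walk t s L' = walk t s 1\<close> inj L L0 by (auto simp: inj_on_def)
          then show False using False by simp
        qed
      qed
    qed
    then show ?thesis using e L by simp
  qed
qed

lemma cyc_end:
  assumes t: "t \<in> E" and nofix: "\<And>k b. nbs b (walk t s k) \<noteq> walk t s k"
  shows "walk t s (LL t s) = t \<and> even (LL t s) \<and> nbs (\<not> s) t = walk t s (LL t s - 1)"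
proof -
  obtain i where i: "i < LL t s" "walk t s i = walk t s (LL t s)" using LL_rep[OF t] by blast
  obtain L' where L: "LL t s = Suc L'" using LL_pos[OF t, of s] by (cases "LL t s") auto
  have inj: "inj_on (walk t s) {..<LL t s}" by (rule LL_inj[OF t])
  have i0: "i = 0"
  proof (rule ccontr)
    assume "i \<noteq> 0"
    then obtain i' where "i = Suc i'" by (cases i) auto
    then have "Suc i = LL t s" using rep_pos[OF t _ i(1) i(2)] by simp
    have "nbs (sd s i) (walk t s i) = walk t s (Suc i)" by simp
    also have "\<dots> = walk t s i" using i(2) \<open>Suc i = LL t s\<close> by simp
    finally show False using nofix by blast
  qed
  then have e: "walk t s (LL t s) = t" using i by simp
  have L0: "L' \<noteq> 0"
  proof
    assume "L' = 0"
    then have "nbs s t = t" using e L by simp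
    then show False using nofix[of s 0] by simp
  qed
  have w: "walk t s L' = nbs (sd s L') t" using walk_back[OF t, of s L'] L e by simp
  have sdL: "sd s L' = (\<not> s)"
  proof (rule ccontr)
    assume "sd s L' \<noteq> (\<not> s)"
    then have "sd s L' = s" by simp
    then have "walk t s L' = walk t s 1" using w by simp
    show False
    proof (cases "L' = 1")
      case True then show False using \<open>sd s L' = s\<close> by simp
    next
      case False
      then have "L' = 1" using \<open>walk t s L' = walk t s 1\<close> inj L L0 by (auto simp: inj_on_def)
      then show False using False by simp
    qed
  qed
  then have "odd L'" by (auto simp: sd_def split: if_splits)
  then have "even (LL t s)" using L by simp
  moreover have "nbs (\<not> s) t = walk t s (LL t s - 1)" using w sdL L by simp
  ultimately show ?thesis using e by simp
qed

lemma path_idx: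
  assumes t: "t \<in> E" and fx: "nbs (\<not> s) t = t" and k: "k < LL t s"
  shows "npath (LL t s) s b k < LL t s \<and> walk t s (npath (LL t s) s b k) = nbs b (walk t s k)"
proof -
  let ?L = "LL t s"
  have pe: "walk t s ?L = walk t s (?L - 1)" by (rule path_end[OF t fx])
  show ?thesis
  proof (cases "sd s k = b")
    case True
    show ?thesis
    proof (cases "Suc k < ?L")
      case True then show ?thesis using \<open>sd s k = b\<close> by (simp add: npath_def)
    next
      case False
      then have kL: "Suc k = ?L" using k by simp
      have "nbs b (walk t s k) = walk t s (Suc k)" using \<open>sd s k = b\<close> by simp
      also have "\<dots> = walk t s k" using pe kL by (metis diff_Suc_1)
      finally have "nbs b (walk t s k) = walk t s k" .
      then show ?thesis using True False k by (simp add: npath_def)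
    qed
  next
    case False
    show ?thesis
    proof (cases k)
      case 0
      then have "b = (\<not> s)" using False by simp
      then show ?thesis using 0 fx k by (simp add: npath_def)
    next
      case (Suc k')
      have "nbs (sd s k') (walk t s (Suc k')) = walk t s k'" by (rule walk_back[OF t])
      moreover have "sd s k' = b" using False Suc by simp
      ultimately show ?thesis using Suc False k by (simp add: npath_def)
    qed
  qed
qed

lemma cyc_idx:
  assumes t: "t \<in> E" and nofix: "\<And>k b. nbs b (walk t s k) \<noteq> walk t s k" and k: "k < LL t s"
  shows "ncyc (LL t s) s b k < LL t s \<and> walk t s (ncyc (LL t s) s b k) = nbs b (walk t s k)"
proof -
  let ?L = "LL t s"
  have ce: "walk t s ?L = t" "nbs (\<not> s) t = walk t s (?L - 1)" using cyc_end[OF t nofix] by auto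
  have L0: "0 < ?L" by (rule LL_pos[OF t])
  show ?thesis
  proof (cases "sd s k = b")
    case True
    show ?thesis
    proof (cases "Suc k < ?L")
      case True then show ?thesis using \<open>sd s k = b\<close> by (simp add: ncyc_def)
    next
      case False
      then have kL: "Suc k = ?L" using k by simp
      have "nbs b (walk t s k) = walk t s (Suc k)" using \<open>sd s k = b\<close> by simp
      also have "\<dots> = t" using kL ce by simp
      finally show ?thesis using True False k L0 by (simp add: ncyc_def)
    qed
  next
    case False
    show ?thesis
    proof (cases k)
      case 0
      then have "b = (\<not> s)" using False by simp
      then show ?thesis using 0 ce L0 by (simp add: ncyc_def)
    next
      case (Suc k')
      have "nbs (sd s k') (walk t s (Suc k')) = walk t s k'" by (rule walk_back[OF t])
      moreover have "sd s k' = b" using False Suc by simp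
      ultimately show ?thesis using Suc False k by (simp add: ncyc_def)
    qed
  qed
qed

lemma rtrancl_closed: "(t, y) \<in> r\<^sup>* \<Longrightarrow> t \<in> S \<Longrightarrow> (\<And>x y. x \<in> S \<Longrightarrow> (x, y) \<in> r \<Longrightarrow> y \<in> S) \<Longrightarrow> y \<in> S"
  by (induction rule: rtrancl_induct) auto

lemma comp_walk:
  assumes t: "t \<in> E" and f: "\<And>k b. k < LL t s \<Longrightarrow> f b k < LL t s \<and> walk t s (f b k) = nbs b (walk t s k)"
  shows "(link G1 G2)\<^sup>* `` {t} = walk t s ` {..<LL t s}"
proof (intro equalityI subsetI)
  fix y assume "y \<in> (link G1 G2)\<^sup>* `` {t}"
  then have ty: "(t, y) \<in> (link G1 G2)\<^sup>*" by simp
  show "y \<in> walk t s ` {..<LL t s}"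
  proof (rule rtrancl_closed[OF ty])
    show "t \<in> walk t s ` {..<LL t s}" using LL_pos[OF t, of s] by (metis imageI lessThan_iff walk.simps(1))
  next
    fix x z assume x: "x \<in> walk t s ` {..<LL t s}" and xz: "(x, z) \<in> link G1 G2"
    then obtain k where k: "k < LL t s" "x = walk t s k" by auto
    have xE: "x \<in> E" using k walk_in[OF t] by simp
    have "z = x \<or> z = nbs True x \<or> z = nbs False x" using link_iff[OF xE] xz by (simp add: nbs_def)
    then show "z \<in> walk t s ` {..<LL t s}" using f[OF k(1)] k x by (metis imageI lessThan_iff)
  qed
next
  fix y assume "y \<in> walk t s ` {..<LL t s}"
  then show "y \<in> (link G1 G2)\<^sup>* `` {t}" using walk_reach[OF t] by auto
qed

end

lemma restr_walk:
  assumes p: "part E G" and C: "C = w ` {..<L}" and CE: "C \<subseteq> E"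
    and f: "\<And>k. k < L \<Longrightarrow> f k < L \<and> w (f k) = nb G (w k)"
  shows "restr C G = img w (NB f L)"
proof (intro equalityI subsetI)
  fix u assume "u \<in> restr C G"
  then have u: "u \<in> G" "u \<subseteq> C" by (auto simp: restr_def)
  have "u \<noteq> {}" using part_card[OF p u(1)] by auto
  then obtain x where x: "x \<in> u" by auto
  then obtain k where k: "k < L" "x = w k" using u C by auto
  have "u = {w k, nb G (w k)}" using mem_blk_nb[OF p _ u(1)] x k u CE by auto
  then have "u = w ` {k, f k}" using f[OF k(1)] by simp
  moreover have "{k, f k} \<in> NB f L" using k by (auto simp: NB_def)
  ultimately show "u \<in> img w (NB f L)" unfolding img_def by blast
next
  fix u assume "u \<in> img w (NB f L)"
  then obtain k where k: "k < L" "u = w ` {k, f k}" by (auto simp: img_def NB_def)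
  then have uu: "u = {w k, nb G (w k)}" using f by simp
  have wk: "w k \<in> E" using k C CE by auto
  have "u \<in> G" using uu nb_blk[OF p wk] blkof_in[OF p wk] by simp
  moreover have "u \<subseteq> C"
  proof -
    have "nb G (w k) \<in> w ` {..<L}" using f[OF k(1)] by (metis imageI lessThan_iff)
    then show ?thesis using uu C k by auto
  qed
  ultimately show "u \<in> restr C G" by (simp add: restr_def)
qed


lemma restr_op:
  assumes "op_ext p \<subseteq> B"
  shows "op_valid (restr B G) p = op_valid G p" and "restr B (op_apply G p) = op_apply (restr B G) p"
proof -
  show "op_valid (restr B G) p = op_valid G p"
    using assms by (cases p) (auto simp: restr_def)
  show "restr B (op_apply G p) = op_apply (restr B G) p"
    using assms by (cases p) (auto simp: restr_def)
qed

lemma restr_seq: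
  "\<forall>p\<in>set os. op_ext p \<subseteq> B \<Longrightarrow> valid_seq (restr B G) os = valid_seq G os \<and> restr B (run_seq G os) = run_seq (restr B G) os"
proof (induction os arbitrary: G)
  case Nil then show ?case by simp
next
  case (Cons p os)
  then have pB: "op_ext p \<subseteq> B" by simp
  have IH: "valid_seq (restr B (op_apply G p)) os = valid_seq (op_apply G p) os \<and>
      restr B (run_seq (op_apply G p) os) = run_seq (restr B (op_apply G p)) os" using Cons by simp
  show ?case using IH restr_op[OF pB, of G] by simp
qed

definition clos :: "'e set \<Rightarrow> 'e set set \<Rightarrow> bool" where
  "clos B G \<longleftrightarrow> (\<forall>u\<in>G. u \<inter> B \<noteq> {} \<longrightarrow> u \<subseteq> B)"

lemma clos_step: "clos B G \<Longrightarrow> op_ext p \<subseteq> B \<Longrightarrow> clos B (op_apply G p)"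
  unfolding clos_def by (cases p) auto

lemma part_intro:
  assumes "\<Union>G = E" "\<And>u. u \<in> G \<Longrightarrow> card u = 1 \<or> card u = 2"
    "\<And>u v x. u \<in> G \<Longrightarrow> v \<in> G \<Longrightarrow> x \<in> u \<Longrightarrow> x \<in> v \<Longrightarrow> u = v"
  shows "part E G"
  unfolding part_def using assms by blast

lemma part_step:
  assumes p: "part E G" and v: "op_valid G p"
  shows "part E (op_apply G p)"
proof -
  have U: "\<Union>G = E" using p by (simp add: part_def)
  have uq: "\<And>u v x. u \<in> G \<Longrightarrow> v \<in> G \<Longrightarrow> x \<in> u \<Longrightarrow> x \<in> v \<Longrightarrow> u = v" using part_uniq[OF p] by blast
  have cd: "\<And>u. u \<in> G \<Longrightarrow> card u = 1 \<or> card u = 2" using part_card[OF p] by blast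
  show ?thesis
  proof (cases p)
    case (Cut s)
    then have s: "s \<in> G" "card s = 2" using v by auto
    then obtain a b where ab: "s = {a, b}" "a \<noteq> b" by (auto simp: card_2_iff)
    have G': "op_apply G p = (G - {s}) \<union> {{a}, {b}}" using Cut ab by auto
    show ?thesis unfolding G'
    proof (rule part_intro)
      show "\<Union>(G - {s} \<union> {{a}, {b}}) = E" using U s(1) ab by auto
      show "\<And>u. u \<in> G - {s} \<union> {{a}, {b}} \<Longrightarrow> card u = 1 \<or> card u = 2" using cd by auto
      fix u v x assume "u \<in> G - {s} \<union> {{a}, {b}}" "v \<in> G - {s} \<union> {{a}, {b}}" "x \<in> u" "x \<in> v"
      then show "u = v" using uq[of _ s] s(1) ab uq by auto
    qed
  next
    case (Join s)
    then have s: "card s = 2" "\<forall>x\<in>s. {x} \<in> G" using v by auto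
    then obtain a b where ab: "s = {a, b}" "a \<noteq> b" by (auto simp: card_2_iff)
    have G': "op_apply G p = (G - {{a}, {b}}) \<union> {{a, b}}" using Join ab by auto
    have ins: "{a} \<in> G" "{b} \<in> G" using s ab by auto
    show ?thesis unfolding G'
    proof (rule part_intro)
      show "\<Union>(G - {{a}, {b}} \<union> {{a, b}}) = E" using U ins by auto
      show "\<And>u. u \<in> G - {{a}, {b}} \<union> {{a, b}} \<Longrightarrow> card u = 1 \<or> card u = 2" using cd ab by auto
      fix u v x assume "u \<in> G - {{a}, {b}} \<union> {{a, b}}" "v \<in> G - {{a}, {b}} \<union> {{a, b}}" "x \<in> u" "x \<in> v"
      then show "u = v" using uq[of _ "{a}"] uq[of _ "{b}"] ins uq by auto
    qed
  next
    case (CutJoin a b c)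
    then have v': "a \<noteq> b" "{a, b} \<in> G" "{c} \<in> G" using v by auto
    have ca: "c \<noteq> a" "c \<noteq> b" using uq[OF v'(2) v'(3), of a] uq[OF v'(2) v'(3), of b] v'(1) by auto
    have G': "op_apply G p = (G - {{a, b}, {c}}) \<union> {{a, c}, {b}}" using CutJoin by auto
    show ?thesis unfolding G'
    proof (rule part_intro)
      show "\<Union>(G - {{a, b}, {c}} \<union> {{a, c}, {b}}) = E" using U v' by auto
      show "\<And>u. u \<in> G - {{a, b}, {c}} \<union> {{a, c}, {b}} \<Longrightarrow> card u = 1 \<or> card u = 2" using cd ca by auto
      fix u v x assume "u \<in> G - {{a, b}, {c}} \<union> {{a, c}, {b}}" "v \<in> G - {{a, b}, {c}} \<union> {{a, c}, {b}}" "x \<in> u" "x \<in> v"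
      then show "u = v" using uq[of _ "{a, b}"] uq[of _ "{c}"] v' ca uq by auto
    qed
  qed
qed

lemma inv_seq:
  "part E G \<Longrightarrow> clos B G \<Longrightarrow> \<forall>p\<in>set os. op_ext p \<subseteq> B \<Longrightarrow> valid_seq G os \<Longrightarrow>
    part E (run_seq G os) \<and> clos B (run_seq G os)"
proof (induction os arbitrary: G)
  case Nil then show ?case by simp
next
  case (Cons p os)
  then show ?case using part_step[of E G p] clos_step[of B G p] by simp
qed



context twop
begin

lemma blk_reach: "y \<in> E \<Longrightarrow> z \<in> blkof G1 y \<or> z \<in> blkof G2 y \<Longrightarrow> (y, z) \<in> link G1 G2"
  using blkof_in[OF p1] blkof_in[OF p2] unfolding link_def by blast

lemma comp_closed:
  assumes c1: "clos B G1" and c2: "clos B G2" and xB: "x \<in> B" and BE: "B \<subseteq> E"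
  shows "(link G1 G2)\<^sup>* `` {x} \<subseteq> B"
proof
  fix y assume "y \<in> (link G1 G2)\<^sup>* `` {x}"
  then have "(x, y) \<in> (link G1 G2)\<^sup>*" by simp
  then show "y \<in> B"
  proof (rule rtrancl_closed)
    show "x \<in> B" by (rule xB)
    fix a b assume a: "a \<in> B" and ab: "(a, b) \<in> link G1 G2"
    then obtain u where u: "u \<in> G1 \<or> u \<in> G2" "a \<in> u" "b \<in> u" unfolding link_def by blast
    then have "u \<subseteq> B" using c1 c2 a unfolding clos_def by blast
    then show "b \<in> B" using u by blast
  qed
qed

lemma sorted_fwd:
  assumes c1: "clos B G1" and c2: "clos B G2" and BE: "B \<subseteq> E"
    and triv: "\<forall>C\<in>components G1 G2. C \<subseteq> B \<longrightarrow> trivial_comp G1 G2 C"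
    and xB: "x \<in> B"
  shows "blkof G1 x = blkof G2 x"
proof -
  let ?C = "(link G1 G2)\<^sup>* `` {x}"
  have xE: "x \<in> E" using xB BE by blast
  have "x \<in> \<Union>G1" using p1 xE by (simp add: part_def)
  then have Cc: "?C \<in> components G1 G2" unfolding components_def by (intro CollectI exI[of _ x]) simp
  have CB: "?C \<subseteq> B" by (rule comp_closed[OF c1 c2 xB BE])
  have finC: "finite ?C" by (rule finite_subset[OF _ fin]) (use CB BE in blast)
  have u1: "blkof G1 x \<in> G1" "x \<in> blkof G1 x" using blkof_in[OF p1 xE] by auto
  have u2: "blkof G2 x \<in> G2" "x \<in> blkof G2 x" using blkof_in[OF p2 xE] by auto
  have s1: "blkof G1 x \<subseteq> ?C"
  proof
    fix z assume "z \<in> blkof G1 x"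
    then have "(x, z) \<in> link G1 G2" using blk_reach[OF xE] by blast
    then show "z \<in> ?C" by (simp add: r_into_rtrancl)
  qed
  have s2: "blkof G2 x \<subseteq> ?C"
  proof
    fix z assume "z \<in> blkof G2 x"
    then have "(x, z) \<in> link G1 G2" using blk_reach[OF xE] by blast
    then show "z \<in> ?C" by (simp add: r_into_rtrancl)
  qed
  have xC: "x \<in> ?C" by simp
  have "trivial_comp G1 G2 ?C" using triv Cc CB by blast
  then have "card ?C = 1 \<or> trivial_crown G1 G2 ?C" unfolding trivial_comp_def by blast
  then consider "card ?C = 1" | "trivial_crown G1 G2 ?C" by blast
  then show ?thesis
  proof cases
    case 1
    then obtain y where "?C = {y}" by (auto simp: card_1_singleton_iff)
    then have "?C = {x}" using xC by simp
    then have "blkof G1 x = {x}" "blkof G2 x = {x}" using s1 s2 u1 u2 by auto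
    then show ?thesis by simp
  next
    case 2
    then have d0: "deg1_vertices G1 G2 ?C = {}" and cs: "card ?C div 2 = 1"
      unfolding trivial_crown_def is_crown_def comp_size_def by auto
    have no1: "\<And>u. u \<in> G1 \<Longrightarrow> u \<subseteq> ?C \<Longrightarrow> card u \<noteq> 1" "\<And>u. u \<in> G2 \<Longrightarrow> u \<subseteq> ?C \<Longrightarrow> card u \<noteq> 1"
      using d0 unfolding deg1_vertices_def by auto
    have c1': "card (blkof G1 x) = 2" using no1(1)[OF u1(1) s1] part_card[OF p1 u1(1)] by auto
    have c2': "card (blkof G2 x) = 2" using no1(2)[OF u2(1) s2] part_card[OF p2 u2(1)] by auto
    have "card ?C = 2 \<or> card ?C = 3" using cs by arith
    then show ?thesis
    proof
      assume "card ?C = 2"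
      then have "blkof G1 x = ?C" "blkof G2 x = ?C" using card_subset_eq[OF finC] s1 s2 c1' c2' by auto
      then show ?thesis by simp
    next
      assume c3: "card ?C = 3"
      have "blkof G1 x \<noteq> ?C" using c1' c3 by auto
      then obtain z where z: "z \<in> ?C" "z \<notin> blkof G1 x" using s1 by blast
      have zE: "z \<in> E" using z CB BE by blast
      have w: "blkof G1 z \<in> G1" "z \<in> blkof G1 z" using blkof_in[OF p1 zE] by auto
      have "(x, z) \<in> (link G1 G2)\<^sup>*" using z by simp
      have sw: "blkof G1 z \<subseteq> ?C"
      proof
        fix y assume "y \<in> blkof G1 z"
        then have "(z, y) \<in> link G1 G2" using blk_reach[OF zE] by blast
        then show "y \<in> ?C" using \<open>(x, z) \<in> (link G1 G2)\<^sup>*\<close> by (simp add: rtrancl_into_rtrancl)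
      qed
      have cw: "card (blkof G1 z) = 2" using no1(1)[OF w(1) sw] part_card[OF p1 w(1)] by auto
      have dj: "blkof G1 x \<inter> blkof G1 z = {}"
        using part_uniq[OF p1 u1(1) w(1)] z(2) w(2) by blast
      have "card (blkof G1 x \<union> blkof G1 z) = 4"
        using card_Un_disjoint[OF _ _ dj] c1' cw by (metis add_2_eq_Suc' card.infinite numeral_Bit0 numeral_One numeral_eq_Suc pred_numeral_simps(2) zero_neq_numeral)
      moreover have "card (blkof G1 x \<union> blkof G1 z) \<le> card ?C" using s1 sw finC by (intro card_mono) auto
      ultimately show ?thesis using c3 by simp
    qed
  qed
qed

lemma sorted_bwd:
  assumes c1: "clos B G1" and c2: "clos B G2" and BE: "B \<subseteq> E"
    and eq: "restr B G1 = restr B G2"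
  shows "\<forall>C\<in>components G1 G2. C \<subseteq> B \<longrightarrow> trivial_comp G1 G2 C"
proof (intro ballI impI)
  fix C assume "C \<in> components G1 G2" and CB: "C \<subseteq> B"
  then obtain x where x: "x \<in> \<Union>G1" "C = (link G1 G2)\<^sup>* `` {x}" unfolding components_def by blast
  have xE: "x \<in> E" using x(1) p1 unfolding part_def by blast
  have xB: "x \<in> B" using x CB by auto
  let ?u = "blkof G1 x"
  have u1: "?u \<in> G1" "x \<in> ?u" using blkof_in[OF p1 xE] by auto
  have uB: "?u \<subseteq> B" using c1 u1 xB unfolding clos_def by blast
  have u2: "?u \<in> G2" using eq u1 uB unfolding restr_def by blast
  have uE: "?u \<subseteq> E" using part_sub[OF p1 u1(1)] .
  have same: "\<And>y. y \<in> ?u \<Longrightarrow> blkof G1 y = ?u \<and> blkof G2 y = ?u"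
    using blkof_eq[OF p1 u1(1)] blkof_eq[OF p2 u2] by blast
  have Cu: "C = ?u"
  proof (intro equalityI subsetI)
    fix y assume "y \<in> C"
    then have "(x, y) \<in> (link G1 G2)\<^sup>*" using x by simp
    then show "y \<in> ?u"
    proof (rule rtrancl_closed)
      show "x \<in> ?u" by (rule u1(2))
      fix a b assume a: "a \<in> ?u" and ab: "(a, b) \<in> link G1 G2"
      then obtain w where w: "w \<in> G1 \<or> w \<in> G2" "a \<in> w" "b \<in> w" unfolding link_def by blast
      then have "w = ?u" using part_uniq[OF p1 _ u1(1)] part_uniq[OF p2 _ u2] a by blast
      then show "b \<in> ?u" using w by simp
    qed
  next
    fix y assume "y \<in> ?u"
    then have "(x, y) \<in> link G1 G2" using blk_reach[OF xE] by blast
    then show "y \<in> C" using x by (simp add: r_into_rtrancl)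
  qed
  have onlyu: "\<And>v. v \<in> G1 \<or> v \<in> G2 \<Longrightarrow> v \<subseteq> ?u \<Longrightarrow> v = ?u"
  proof -
    fix v assume v: "v \<in> G1 \<or> v \<in> G2" "v \<subseteq> ?u"
    have "v \<noteq> {}" using v part_card[OF p1] part_card[OF p2] by fastforce
    then obtain y where "y \<in> v" by blast
    then show "v = ?u" using v part_uniq[OF p1 _ u1(1)] part_uniq[OF p2 _ u2] by blast
  qed
  have cu: "card ?u = 1 \<or> card ?u = 2" by (rule part_card[OF p1 u1(1)])
  then show "trivial_comp G1 G2 C"
  proof
    assume c: "card ?u = 1"
    have "deg1_vertices G1 G2 C = {Inl ?u, Inr ?u}"
      unfolding deg1_vertices_def Cu using onlyu u1 u2 c by auto
    then have "card (deg1_vertices G1 G2 C) = 2" by simp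
    then show ?thesis using c Cu unfolding trivial_comp_def N_shaped_def is_path_comp_def by simp
  next
    assume c: "card ?u = 2"
    have "deg1_vertices G1 G2 C = {}"
      unfolding deg1_vertices_def Cu using onlyu c by fastforce
    then show ?thesis using c Cu unfolding trivial_comp_def trivial_crown_def is_crown_def comp_size_def by simp
  qed
qed

lemma sorted_equiv:
  assumes c1: "clos B G1" and c2: "clos B G2" and BE: "B \<subseteq> E"
  shows "(\<forall>C\<in>components G1 G2. C \<subseteq> B \<longrightarrow> trivial_comp G1 G2 C) = (restr B G1 = restr B G2)"
proof
  assume triv: "\<forall>C\<in>components G1 G2. C \<subseteq> B \<longrightarrow> trivial_comp G1 G2 C"
  have bb: "\<And>x. x \<in> B \<Longrightarrow> blkof G1 x = blkof G2 x" using sorted_fwd[OF c1 c2 BE triv] by blast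
  show "restr B G1 = restr B G2"
  proof (intro equalityI subsetI)
    fix u assume "u \<in> restr B G1"
    then have u: "u \<in> G1" "u \<subseteq> B" by (auto simp: restr_def)
    have "u \<noteq> {}" using part_card[OF p1 u(1)] by auto
    then obtain x where x: "x \<in> u" by blast
    have xE: "x \<in> E" using x u BE by blast
    have "u = blkof G1 x" using blkof_eq[OF p1 u(1) x] by simp
    also have "\<dots> = blkof G2 x" using bb x u by blast
    finally have "u \<in> G2" using blkof_in[OF p2 xE] by simp
    then show "u \<in> restr B G2" using u by (simp add: restr_def)
  next
    fix u assume "u \<in> restr B G2"
    then have u: "u \<in> G2" "u \<subseteq> B" by (auto simp: restr_def)
    have "u \<noteq> {}" using part_card[OF p2 u(1)] by auto
    then obtain x where x: "x \<in> u" by blast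
    have xE: "x \<in> E" using x u BE by blast
    have "u = blkof G2 x" using blkof_eq[OF p2 u(1) x] by simp
    also have "\<dots> = blkof G1 x" using bb x u by (metis subsetD)
    finally have "u \<in> G1" using blkof_in[OF p1 xE] by simp
    then show "u \<in> restr B G1" using u by (simp add: restr_def)
  qed
next
  assume "restr B G1 = restr B G2"
  then show "\<forall>C\<in>components G1 G2. C \<subseteq> B \<longrightarrow> trivial_comp G1 G2 C" by (rule sorted_bwd[OF c1 c2 BE])
qed

end


lemma nST_red:
  assumes p1: "part E G1" and p2: "part E G2" and fin: "finite E" and BE: "B \<subseteq> E"
    and c1: "clos B G1" and c2: "clos B G2"
  shows "nST_single G1 G2 B = cntR (restr B G2) B (restr B G1) (d_comp G1 G2 B)"
proof -
  have "{os. length os = d_comp G1 G2 B \<and> (\<forall>o1 \<in> set os. op_ext o1 \<subseteq> B) \<and> valid_seq G1 os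
      \<and> (\<forall>C \<in> components (run_seq G1 os) G2. C \<subseteq> B \<longrightarrow> trivial_comp (run_seq G1 os) G2 C)}
    = seqs (restr B G2) B (restr B G1) (d_comp G1 G2 B)"
  proof (intro equalityI subsetI)
    fix os assume "os \<in> {os. length os = d_comp G1 G2 B \<and> (\<forall>o1 \<in> set os. op_ext o1 \<subseteq> B) \<and> valid_seq G1 os
      \<and> (\<forall>C \<in> components (run_seq G1 os) G2. C \<subseteq> B \<longrightarrow> trivial_comp (run_seq G1 os) G2 C)}"
    then have a: "length os = d_comp G1 G2 B" "\<forall>o1 \<in> set os. op_ext o1 \<subseteq> B" "valid_seq G1 os"
      "\<forall>C \<in> components (run_seq G1 os) G2. C \<subseteq> B \<longrightarrow> trivial_comp (run_seq G1 os) G2 C" by auto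
    have inv: "part E (run_seq G1 os) \<and> clos B (run_seq G1 os)" using inv_seq[OF p1 c1 a(2,3)] .
    interpret tw: twop E "run_seq G1 os" G2 using inv p2 fin by unfold_locales auto
    have "restr B (run_seq G1 os) = restr B G2" using tw.sorted_equiv[OF _ c2 BE] inv a(4) by simp
    then show "os \<in> seqs (restr B G2) B (restr B G1) (d_comp G1 G2 B)"
      using restr_seq[OF a(2), of G1] a by (simp add: seqs_def)
  next
    fix os assume "os \<in> seqs (restr B G2) B (restr B G1) (d_comp G1 G2 B)"
    then have a: "length os = d_comp G1 G2 B" "\<forall>o1 \<in> set os. op_ext o1 \<subseteq> B" "valid_seq (restr B G1) os"
      "run_seq (restr B G1) os = restr B G2" by (auto simp: seqs_def)
    have v: "valid_seq G1 os" "restr B (run_seq G1 os) = restr B G2" using restr_seq[OF a(2), of G1] a by auto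
    have inv: "part E (run_seq G1 os) \<and> clos B (run_seq G1 os)" using inv_seq[OF p1 c1 a(2) v(1)] .
    interpret tw: twop E "run_seq G1 os" G2 using inv p2 fin by unfold_locales auto
    have "\<forall>C \<in> components (run_seq G1 os) G2. C \<subseteq> B \<longrightarrow> trivial_comp (run_seq G1 os) G2 C"
      using tw.sorted_equiv[OF _ c2 BE] inv v(2) by simp
    then show "os \<in> {os. length os = d_comp G1 G2 B \<and> (\<forall>o1 \<in> set os. op_ext o1 \<subseteq> B) \<and> valid_seq G1 os
      \<and> (\<forall>C \<in> components (run_seq G1 os) G2. C \<subseteq> B \<longrightarrow> trivial_comp (run_seq G1 os) G2 C)}"
      using a v by simp
  qed
  then show ?thesis unfolding nST_single_def cntR_def by simp
qed

lemma NB_Pow: "(\<And>k. k < L \<Longrightarrow> f k < L) \<Longrightarrow> NB f L \<subseteq> Pow {..<L}"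
  unfolding NB_def by auto

context twop
begin

lemma comp_clos:
  assumes "B = (link G1 G2)\<^sup>* `` {t}"
  shows "clos B G1" "clos B G2"
proof -
  have "\<And>u. u \<in> G1 \<or> u \<in> G2 \<Longrightarrow> u \<inter> B \<noteq> {} \<Longrightarrow> u \<subseteq> B"
  proof -
    fix u assume u: "u \<in> G1 \<or> u \<in> G2" "u \<inter> B \<noteq> {}"
    then obtain y where y: "y \<in> u" "y \<in> B" by blast
    show "u \<subseteq> B"
    proof
      fix z assume "z \<in> u"
      then have "(y, z) \<in> link G1 G2" using u y unfolding link_def by blast
      then show "z \<in> B" using y assms by (auto intro: rtrancl_into_rtrancl)
    qed
  qed
  then show "clos B G1" "clos B G2" unfolding clos_def by auto
qed

lemma gen_count:
  assumes t: "t \<in> E" and B: "B = (link G1 G2)\<^sup>* `` {t}"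
    and f: "\<And>k b. k < LL t s \<Longrightarrow> f b k < LL t s \<and> walk t s (f b k) = nbs b (walk t s k)"
  shows "nST_single G1 G2 B = cntR (NB (f False) (LL t s)) {..<LL t s} (NB (f True) (LL t s)) (d_comp G1 G2 B)
     \<and> card B = LL t s"
proof -
  let ?L = "LL t s" and ?w = "walk t s"
  have Bw: "B = ?w ` {..<?L}" using comp_walk[OF t f] B by simp
  have inj: "inj_on ?w {..<?L}" by (rule LL_inj[OF t])
  have BE: "B \<subseteq> E" using Bw walk_in[OF t] by auto
  have r1: "restr B G1 = img ?w (NB (f True) ?L)"
    by (rule restr_walk[OF p1 Bw BE]) (use f in \<open>auto simp: nbs_def\<close>)
  have r2: "restr B G2 = img ?w (NB (f False) ?L)"
    by (rule restr_walk[OF p2 Bw BE]) (use f in \<open>auto simp: nbs_def\<close>)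
  have "nST_single G1 G2 B = cntR (restr B G2) B (restr B G1) (d_comp G1 G2 B)"
    by (rule nST_red[OF p1 p2 fin BE comp_clos[OF B]])
  also have "\<dots> = cntR (img ?w (NB (f False) ?L)) (?w ` {..<?L}) (img ?w (NB (f True) ?L)) (d_comp G1 G2 B)"
    using r1 r2 Bw by simp
  also have "\<dots> = cntR (NB (f False) ?L) {..<?L} (NB (f True) ?L) (d_comp G1 G2 B)"
    by (rule cntR_transfer[OF inj]) (auto intro!: NB_Pow dest: f)
  finally show ?thesis using Bw inj by (simp add: card_image)
qed

lemma path_count:
  assumes t: "t \<in> E" and B: "B = (link G1 G2)\<^sup>* `` {t}" and fx: "nbs (\<not> s) t = t"
  shows "nST_single G1 G2 B = cntR (NB (npath (LL t s) s False) (LL t s)) {..<LL t s}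
      (NB (npath (LL t s) s True) (LL t s)) (d_comp G1 G2 B) \<and> card B = LL t s"
  using gen_count[OF t B, of s "npath (LL t s) s"] path_idx[OF t fx] by blast

lemma cyc_count:
  assumes t: "t \<in> E" and B: "B = (link G1 G2)\<^sup>* `` {t}" and nofix: "\<And>k b. nbs b (walk t s k) \<noteq> walk t s k"
  shows "nST_single G1 G2 B = cntR (NB (ncyc (LL t s) s False) (LL t s)) {..<LL t s}
      (NB (ncyc (LL t s) s True) (LL t s)) (d_comp G1 G2 B) \<and> card B = LL t s \<and> even (LL t s)"
  using gen_count[OF t B, of s "ncyc (LL t s) s"] cyc_idx[OF t nofix] cyc_end[OF t nofix] by blast

end


context twop
begin

lemma link_sym: "(x, y) \<in> link G1 G2 \<Longrightarrow> (y, x) \<in> link G1 G2"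
  unfolding link_def by blast

lemma rt_sym: "(x, y) \<in> (link G1 G2)\<^sup>* \<Longrightarrow> (y, x) \<in> (link G1 G2)\<^sup>*"
proof (induction rule: rtrancl_induct)
  case base then show ?case by simp
next
  case (step y z)
  then show ?case using link_sym by (meson converse_rtrancl_into_rtrancl)
qed

lemma comp_same: "t \<in> (link G1 G2)\<^sup>* `` {x0} \<Longrightarrow> (link G1 G2)\<^sup>* `` {t} = (link G1 G2)\<^sup>* `` {x0}"
  using rt_sym by (auto intro: rtrancl_trans)

lemma dp_ne_crown: "is_path_comp G1 G2 B \<Longrightarrow> d_comp G1 G2 B = comp_size B"
  unfolding is_path_comp_def d_comp_def trivial_crown_def nontrivial_crown_def is_crown_def by auto

lemma inl_sing: assumes "Inl u \<in> deg1_vertices G1 G2 B" "B \<subseteq> E"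
  shows "\<exists>t\<in>B. nb G1 t = t"
proof -
  have u: "u \<in> G1" "u \<subseteq> B" "card u = 1" using assms(1) unfolding deg1_vertices_def by auto
  then obtain t where "u = {t}" by (auto simp: card_1_singleton_iff)
  then show ?thesis using u sing_iff[OF p1, of t] assms(2) by auto
qed

lemma inr_sing: assumes "Inr u \<in> deg1_vertices G1 G2 B" "B \<subseteq> E"
  shows "\<exists>t\<in>B. nb G2 t = t"
proof -
  have u: "u \<in> G2" "u \<subseteq> B" "card u = 1" using assms(1) unfolding deg1_vertices_def by auto
  then obtain t where "u = {t}" by (auto simp: card_1_singleton_iff)
  then show ?thesis using u sing_iff[OF p2, of t] assms(2) by auto
qed

lemma comp_E: "x0 \<in> E \<Longrightarrow> (link G1 G2)\<^sup>* `` {x0} \<subseteq> E"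
proof
  fix y assume "x0 \<in> E" "y \<in> (link G1 G2)\<^sup>* `` {x0}"
  then have "(x0, y) \<in> (link G1 G2)\<^sup>*" by simp
  then show "y \<in> E" using \<open>x0 \<in> E\<close> by (rule rtrancl_closed) (use link_E in blast)
qed

lemma W_case:
  assumes x0: "x0 \<in> E" and B: "B = (link G1 G2)\<^sup>* `` {x0}" and W: "W_shaped G1 G2 B" and w1: "comp_size B \<ge> 1"
  shows "nST_single G1 G2 B = 2 ^ (comp_size B - 1)"
proof -
  have BE: "B \<subseteq> E" using comp_E[OF x0] B by simp
  have "deg1_vertices G1 G2 B \<noteq> {}" using W unfolding W_shaped_def is_path_comp_def by auto
  then obtain v where "v \<in> deg1_vertices G1 G2 B" by blast
  moreover have "deg1_vertices G1 G2 B \<subseteq> range Inl" using W unfolding W_shaped_def by simp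
  ultimately obtain u where "Inl u \<in> deg1_vertices G1 G2 B" by blast
  then obtain t where t: "t \<in> B" "nb G1 t = t" using inl_sing BE by blast
  have tE: "t \<in> E" using t BE by blast
  have Bt: "B = (link G1 G2)\<^sup>* `` {t}" using comp_same t(1) B by simp
  have fx: "nbs (\<not> False) t = t" using t by (simp add: nbs_def)
  note pc = path_count[OF tE Bt fx]
  obtain w' where w: "comp_size B = Suc w'" using w1 by (cases "comp_size B") auto
  have cB: "card B = 2 * Suc w'" using W w unfolding W_shaped_def comp_size_def by auto
  have L: "LL t False = 2 * Suc w'" using pc cB by simp
  have d: "d_comp G1 G2 B = Suc w'" using dp_ne_crown W w unfolding W_shaped_def by simp
  have "nST_single G1 G2 B = cntR (TW (Suc w')) {..<2 * Suc w'} (SW (Suc w') 0 (Suc w')) (Suc w')"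
    using pc L d W_G1[of "Suc w'"] W_G2[of "Suc w'"] by simp
  also have "\<dots> = 2 ^ w'" by (rule W_init) simp
  finally show ?thesis using w by simp
qed

lemma M_case:
  assumes x0: "x0 \<in> E" and B: "B = (link G1 G2)\<^sup>* `` {x0}" and M: "M_shaped G1 G2 B" and m1: "comp_size B \<ge> 1"
  shows "nST_single G1 G2 B = 2 ^ (comp_size B - 1)"
proof -
  have BE: "B \<subseteq> E" using comp_E[OF x0] B by simp
  have "deg1_vertices G1 G2 B \<noteq> {}" using M unfolding M_shaped_def is_path_comp_def by auto
  then obtain v where "v \<in> deg1_vertices G1 G2 B" by blast
  moreover have "deg1_vertices G1 G2 B \<subseteq> range Inr" using M unfolding M_shaped_def by simp
  ultimately obtain u where "Inr u \<in> deg1_vertices G1 G2 B" by blast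
  then obtain t where t: "t \<in> B" "nb G2 t = t" using inr_sing BE by blast
  have tE: "t \<in> E" using t BE by blast
  have Bt: "B = (link G1 G2)\<^sup>* `` {t}" using comp_same t(1) B by simp
  have fx: "nbs (\<not> True) t = t" using t by (simp add: nbs_def)
  note pc = path_count[OF tE Bt fx]
  obtain m' where m: "comp_size B = Suc m'" using m1 by (cases "comp_size B") auto
  have cB: "card B = 2 * Suc m'" using M m unfolding M_shaped_def comp_size_def by auto
  have L: "LL t True = 2 * Suc m'" using pc cB by simp
  have d: "d_comp G1 G2 B = Suc m'" using dp_ne_crown M m unfolding M_shaped_def by simp
  have "nST_single G1 G2 B = cntR (TM (Suc m')) {..<2 * Suc m'} (TW (Suc m')) (Suc m')"
    using pc L d M_G1[of "Suc m'"] M_G2[of "Suc m'"] by simp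
  also have "\<dots> = 2 ^ m'" by (rule M_init) simp
  finally show ?thesis using m by simp
qed

lemma N_case:
  assumes x0: "x0 \<in> E" and B: "B = (link G1 G2)\<^sup>* `` {x0}" and N: "N_shaped G1 G2 B"
  shows "nST_single G1 G2 B = 1"
proof -
  have BE: "B \<subseteq> E" using comp_E[OF x0] B by simp
  have odd: "odd (card B)" using N unfolding N_shaped_def by simp
  have "deg1_vertices G1 G2 B \<noteq> {}" using N unfolding N_shaped_def is_path_comp_def by auto
  then obtain v where v: "v \<in> deg1_vertices G1 G2 B" by blast
  have "\<exists>t\<in>B. nb G1 t = t"
  proof (cases v)
    case (Inl u) then show ?thesis using inl_sing v BE by blast
  next
    case (Inr u)
    then obtain t0 where t0: "t0 \<in> B" "nb G2 t0 = t0" using inr_sing v BE by blast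
    have t0E: "t0 \<in> E" using t0 BE by blast
    have Bt0: "B = (link G1 G2)\<^sup>* `` {t0}" using comp_same t0(1) B by simp
    have fx: "nbs (\<not> True) t0 = t0" using t0 by (simp add: nbs_def)
    have cL: "card B = LL t0 True" using path_count[OF t0E Bt0 fx] by simp
    have pe: "walk t0 True (LL t0 True) = walk t0 True (LL t0 True - 1)" by (rule path_end[OF t0E fx])
    obtain L' where L: "LL t0 True = Suc L'" using LL_pos[OF t0E, of True] by (cases "LL t0 True") auto
    have "even L'" using odd cL L by simp
    then have "sd True L' = True" by (simp add: sd_def)
    then have "nb G1 (walk t0 True L') = walk t0 True L'" using pe L by (simp add: nbs_def)
    moreover have "walk t0 True L' \<in> B" using walk_reach[OF t0E] Bt0 by simp
    ultimately show ?thesis by blast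
  qed
  then obtain t where t: "t \<in> B" "nb G1 t = t" by blast
  have tE: "t \<in> E" using t BE by blast
  have Bt: "B = (link G1 G2)\<^sup>* `` {t}" using comp_same t(1) B by simp
  have fx: "nbs (\<not> False) t = t" using t by (simp add: nbs_def)
  note pc = path_count[OF tE Bt fx]
  define n where "n = card B div 2"
  have cB: "card B = 2 * n + 1" using odd n_def by simp
  have L: "LL t False = 2 * n + 1" using pc cB by simp
  have d: "d_comp G1 G2 B = n" using dp_ne_crown N n_def unfolding N_shaped_def comp_size_def by simp
  have "nST_single G1 G2 B = cntR (TN n) {..<2 * n + 1} (SN n 0) n"
    using pc L d N_G1[of n] N_G2[of n] by simp
  also have "\<dots> = 1" using N_count[of n n] by simp
  finally show ?thesis .
qed

lemma C_case:
  assumes x0: "x0 \<in> E" and B: "B = (link G1 G2)\<^sup>* `` {x0}" and C: "nontrivial_crown G1 G2 B"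
  shows "nST_single G1 G2 B = comp_size B * 2 ^ (comp_size B - 1)"
proof -
  have BE: "B \<subseteq> E" using comp_E[OF x0] B by simp
  have d0: "deg1_vertices G1 G2 B = {}" using C unfolding nontrivial_crown_def is_crown_def by simp
  have nofix: "\<And>k b. nbs b (walk x0 True k) \<noteq> walk x0 True k"
  proof
    fix k b assume e: "nbs b (walk x0 True k) = walk x0 True k"
    let ?y = "walk x0 True k"
    have yB: "?y \<in> B" using walk_reach[OF x0] B by simp
    have yE: "?y \<in> E" using yB BE by blast
    show False
    proof (cases b)
      case True
      then have "{?y} \<in> G1" using e sing_iff[OF p1 yE] by (simp add: nbs_def)
      then have "Inl {?y} \<in> deg1_vertices G1 G2 B" using yB unfolding deg1_vertices_def by auto
      then show False using d0 by simp
    next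
      case False
      then have "{?y} \<in> G2" using e sing_iff[OF p2 yE] by (simp add: nbs_def)
      then have "Inr {?y} \<in> deg1_vertices G1 G2 B" using yB unfolding deg1_vertices_def by auto
      then show False using d0 by simp
    qed
  qed
  note cc = cyc_count[OF x0 B nofix]
  define c where "c = comp_size B"
  have cB: "card B = 2 * c" using cc c_def unfolding comp_size_def by auto
  have L: "LL x0 True = 2 * c" using cc cB by simp
  have "0 < c" using LL_pos[OF x0, of True] L by simp
  moreover have "c \<noteq> 1" using C c_def unfolding nontrivial_crown_def by simp
  ultimately obtain c' where c: "c = Suc c'" "0 < c" by (cases c) auto
  have d: "d_comp G1 G2 B = Suc c" using C c_def unfolding d_comp_def nontrivial_crown_def trivial_crown_def by simp
  have "nST_single G1 G2 B = cntR (TC c) {..<2 * c} (TW c) (Suc c)"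
    using cc L d C_G1[OF c(2)] C_G2[OF c(2)] by simp
  also have "\<dots> = c * 2 ^ c'" by (rule crown_nat[OF c(1)])
  finally show ?thesis using c c_def by simp
qed

end

lemma finite_ext: "finite (UNIV :: ext set)"
proof -
  have "(UNIV :: ext set) = {Tail, Head}" using ext.exhaust by auto
  moreover have "finite {Tail, Head}" by simp
  ultimately show ?thesis by metis
qed

lemma genome_part: "genome X G \<Longrightarrow> part (extremities X) G \<and> finite (extremities X)"
  unfolding genome_def part_def extremities_def using finite_ext by auto

theorem mainTheorem3:
  fixes X :: "'g set" and G1 G2 :: "'g extremity set set" and B :: "'g extremity set"
  assumes "genome X G1" and "genome X G2" and "B \<in> components G1 G2"
  shows "(N_shaped G1 G2 B \<longrightarrow> nST_single G1 G2 B = 1)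
       \<and> (W_shaped G1 G2 B \<and> comp_size B \<ge> 1 \<longrightarrow> nST_single G1 G2 B = 2 ^ (comp_size B - 1))
       \<and> (M_shaped G1 G2 B \<and> comp_size B \<ge> 1 \<longrightarrow> nST_single G1 G2 B = 2 ^ (comp_size B - 1))
       \<and> (nontrivial_crown G1 G2 B \<longrightarrow>
            nST_single G1 G2 B = comp_size B * 2 ^ (comp_size B - 1))"
proof -
  have g1: "part (extremities X) G1" "finite (extremities X)" using genome_part[OF assms(1)] by auto
  have g2: "part (extremities X) G2" using genome_part[OF assms(2)] by auto
  interpret tw: twop "extremities X" G1 G2 using g1 g2 by unfold_locales auto
  obtain x0 where x0: "x0 \<in> \<Union>G1" "B = (link G1 G2)\<^sup>* `` {x0}"
    using assms(3) unfolding components_def by blast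
  have x0E: "x0 \<in> extremities X" using x0(1) g1(1) unfolding part_def by blast
  show ?thesis
    using tw.N_case[OF x0E x0(2)] tw.W_case[OF x0E x0(2)] tw.M_case[OF x0E x0(2)] tw.C_case[OF x0E x0(2)]
    by blast
qed


end
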